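(* Let $r$ be a positive integer, $p \equiv 3 \pmod 4$ a prime, and $q=p^{4r}$. Let $g$ be a primitive root of $\mathbb{F}_q$ and let $$B=\{g^{4k}:1 \leq k \leq (q-1)/4\} \cup \{g^{4k+3}:1 \leq k \leq (q-1)/4\}.$$ Let $I=\{x^{p^r}-x: x \in \mathbb{F}_q\}$. If $h \in \mathbb{F}_q \setminus \mathbb{F}_{p^r}$, then $\mathbb{F}_{p^r} \oplus h\mathbb{F}_{p^r}=\{x+hy: x,y\in\mathbb{F}_{p^r}\}$ forms a (maximum) clique in the Peisert graph $P_q^*$ (constructed with $g$) if and only if $I \cap h^{-1} I \cap B=\emptyset$.
   Context: The Peisert graph $P_q^*$ (for $q=p^{2s}$, $p\equiv 3\pmod 4$, with primitive root $g$) has vertex set $\mathbb{F}_q$, two distinct vertices being adjacent iff their difference lies in $\{g^j: j \equiv 0,1 \pmod 4\}$. $h^{-1}I=\{h^{-1}x: x\in I\}$. *)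

theory Defs
  imports "HOL-Computational_Algebra.Primes"
begin

definition primitive_root :: "'a::{finite,field} \<Rightarrow> bool" where
  "primitive_root g \<longleftrightarrow> g \<noteq> 0 \<and> (\<forall>x. x \<noteq> 0 \<longrightarrow> (\<exists>k::nat. x = g ^ k))"

definition peisert_adj :: "'a::{finite,field} \<Rightarrow> 'a \<Rightarrow> 'a \<Rightarrow> bool" where
  "peisert_adj g x y \<longleftrightarrow> x \<noteq> y \<and> (\<exists>j::nat. (j mod 4 = 0 \<or> j mod 4 = 1) \<and> x - y = g ^ j)"

definition peisert_clique :: "'a::{finite,field} \<Rightarrow> 'a set \<Rightarrow> bool" where
  "peisert_clique g S \<longleftrightarrow> (\<forall>x\<in>S. \<forall>y\<in>S. x \<noteq> y \<longrightarrow> peisert_adj g x y)"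

definition subfield_pow :: "nat \<Rightarrow> 'a::{finite,field} set" where
  "subfield_pow m = {x. x ^ m = x}"

end

theory Submission
  imports Defs "HOL-Number_Theory.Residues" "HOL-Computational_Algebra.Polynomial"
begin



lemma card_fibers:
  fixes f :: "'b::ab_group_add \<Rightarrow> 'c::ab_group_add"
  assumes fin: "finite V"
    and cld: "\<And>x y. x \<in> V \<Longrightarrow> y \<in> V \<Longrightarrow> x - y \<in> V"
    and cla: "\<And>x y. x \<in> V \<Longrightarrow> y \<in> V \<Longrightarrow> x + y \<in> V"
    and add: "\<And>x y. x \<in> V \<Longrightarrow> y \<in> V \<Longrightarrow> f (x + y) = f x + f y"
  shows "card V = card (f ` V) * card {x\<in>V. f x = 0}"
proof -
  define K where "K = {x\<in>V. f x = 0}"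
  define fib where "fib y = {x\<in>V. f x = y}" for y
  have V_eq: "V = (\<Union>y\<in>f ` V. fib y)" by (auto simp: fib_def)
  have "card V = (\<Sum>y\<in>f ` V. card (fib y))"
    by (subst V_eq, rule card_UN_disjoint) (use fin in \<open>auto simp: fib_def\<close>)
  also have "\<dots> = (\<Sum>y\<in>f ` V. card K)"
  proof (rule sum.cong[OF refl])
    fix y assume "y \<in> f ` V"
    then obtain x0 where x0: "x0 \<in> V" "y = f x0" by auto
    have inj: "inj_on (\<lambda>x. x - x0) (fib y)" by (rule inj_onI) simp
    have "(\<lambda>x. x - x0) ` fib y = K"
    proof
      show "(\<lambda>x. x - x0) ` fib y \<subseteq> K"
      proof
        fix z assume "z \<in> (\<lambda>x. x - x0) ` fib y"
        then obtain x where x: "x \<in> V" "f x = y" "z = x - x0" by (auto simp: fib_def)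
        have "f x = f ((x - x0) + x0)" by simp
        also have "\<dots> = f (x - x0) + f x0" using add cld x x0 by blast
        finally show "z \<in> K" using x x0 cld by (auto simp: K_def)
      qed
      show "K \<subseteq> (\<lambda>x. x - x0) ` fib y"
      proof
        fix k assume k: "k \<in> K"
        have "k + x0 \<in> fib y" using k x0 add cla by (auto simp: K_def fib_def)
        thus "k \<in> (\<lambda>x. x - x0) ` fib y" by (intro image_eqI[of _ _ "k + x0"]) auto
      qed
    qed
    thus "card (fib y) = card K" using card_image[OF inj] by simp
  qed
  finally show ?thesis by (simp add: K_def)
qed

locale PS =
  fixes p r :: nat and g :: "'a::{finite,field}"
  assumes r_pos: "r > 0" and p_prime: "prime p" and p_mod: "p mod 4 = 3"
    and card_q: "card (UNIV::'a set) = p ^ (4 * r)"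
    and prim: "primitive_root g"
begin

definition Q where "Q = p ^ r"
definition q where "q = card (UNIV :: 'a set)"

lemma q_eq: "q = Q ^ 4"
  by (simp add: q_def Q_def card_q power_mult mult.commute)

lemma p_ge3: "p \<ge> 3"
  using p_mod p_prime prime_ge_2_nat[OF p_prime] by (cases "p = 2") auto

lemma p_odd: "odd p" using p_mod by presburger

lemma Q_odd: "odd Q" unfolding Q_def using p_odd by simp

lemma Q_ge3: "Q \<ge> 3"
proof -
  have "p ^ 1 \<le> p ^ r" using r_pos p_ge3 by (intro power_increasing) auto
  thus ?thesis using p_ge3 unfolding Q_def by simp
qed

lemma CHAR_eq: "CHAR('a) = p"
proof -
  have fin: "finite (UNIV :: 'a set)" by simp
  have pc: "prime CHAR('a)" by (rule prime_CHAR_semidom) (rule finite_imp_CHAR_pos[OF fin])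
  have "CHAR('a) dvd p ^ (4*r)" using CHAR_dvd_CARD[where 'a='a] card_q by simp
  hence "CHAR('a) dvd p" using pc prime_dvd_power by blast
  thus ?thesis using pc p_prime by (simp add: primes_dvd_imp_eq)
qed

lemma frob_add: "(x + y :: 'a) ^ (p ^ n) = x ^ (p ^ n) + y ^ (p ^ n)"
  by (rule freshmans_dream') (auto simp: CHAR_eq p_prime)

lemma frob_neg: "(- x :: 'a) ^ (p ^ n) = - (x ^ (p ^ n))"
  using p_odd by (simp add: power_minus_odd)

lemma frob_diff: "(x - y :: 'a) ^ (p ^ n) = x ^ (p ^ n) - y ^ (p ^ n)"
  using frob_add[of x "-y" n] frob_neg[of y n] by simp

lemma Q_add: "(x + y :: 'a) ^ Q = x ^ Q + y ^ Q" unfolding Q_def by (rule frob_add)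
lemma Q_diff: "(x - y :: 'a) ^ Q = x ^ Q - y ^ Q" unfolding Q_def by (rule frob_diff)
lemma Q_neg: "(- x :: 'a) ^ Q = - (x ^ Q)" unfolding Q_def by (rule frob_neg)

lemma pow_q: "(x::'a) ^ q = x"
proof (cases "x = 0")
  case False
  have "x * (\<Prod>y\<in>UNIV-{0}. x * y) = x * x ^ (card (UNIV :: 'a set) - 1) * \<Prod>(UNIV-{0})"
    by (simp add: prod.distrib mult_ac)
  also have "x * x ^ (card (UNIV :: 'a set) - 1) = x ^ Suc (card (UNIV :: 'a set) - 1)"
    by (subst power_Suc) auto
  also have "Suc (card (UNIV :: 'a set) - 1) = card (UNIV :: 'a set)"
    using finite_UNIV_card_ge_0[where ?'a = 'a] by simp
  also have "(\<Prod>y\<in>UNIV-{0}. x * y) = (\<Prod>y\<in>UNIV-{0}. y)"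
    by (rule prod.reindex_bij_witness[of _ "\<lambda>y. y / x" "\<lambda>y. x * y"]) (use False in auto)
  finally show ?thesis
    by (simp add: q_def)
qed (use finite_UNIV_card_ge_0[where ?'a = 'a] in \<open>auto simp: q_def\<close>)

lemma q_ge: "q \<ge> 81"
proof -
  have "3^4 \<le> Q^4" using Q_ge3 by (intro power_mono) auto
  thus ?thesis using q_eq by simp
qed

lemma pow_q1: "(x::'a) \<noteq> 0 \<Longrightarrow> x ^ (q - 1) = 1"
proof -
  assume "x \<noteq> 0"
  have "x * x ^ (q - 1) = x ^ q" using q_ge by (metis One_nat_def Suc_pred not_gr0 not_numeral_le_zero power_Suc)
  also have "\<dots> = x * 1" using pow_q by simp
  finally show ?thesis using \<open>x \<noteq> 0\<close> by simp
qed

lemma pow_Q4: "(x::'a) ^ (Q ^ 4) = x" using pow_q q_eq by simp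

lemma g_ne0: "g \<noteq> 0" using prim unfolding primitive_root_def by simp

lemma g_inj: "inj_on (\<lambda>k. g ^ k) {..<q-1}"
proof -
  have "(\<lambda>k. g ^ k) ` {..<q-1} = UNIV - {0}"
  proof
    show "(\<lambda>k. g ^ k) ` {..<q-1} \<subseteq> UNIV - {0}" using g_ne0 by auto
    show "UNIV - {0} \<subseteq> (\<lambda>k. g ^ k) ` {..<q-1}"
    proof
      fix x :: 'a assume "x \<in> UNIV - {0}"
      then obtain k where k: "x = g ^ k" using prim unfolding primitive_root_def by auto
      have "g ^ k = g ^ ((q-1) * (k div (q-1)) + k mod (q-1))" by (simp only: mult_div_mod_eq)
      also have "\<dots> = g ^ (k mod (q-1))" by (simp only: power_add power_mult pow_q1[OF g_ne0] power_one mult_1_left)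
      finally show "x \<in> (\<lambda>k. g ^ k) ` {..<q-1}" using k q_ge by auto
    qed
  qed
  moreover have "card (UNIV - {0::'a}) = q - 1" by (simp add: q_def card_Diff_subset)
  ultimately show ?thesis by (metis card_lessThan eq_card_imp_inj_on finite_lessThan)
qed

lemma g_pow_eq: "g ^ i = g ^ j \<longleftrightarrow> i mod (q-1) = j mod (q-1)"
proof -
  have red: "g ^ k = g ^ (k mod (q-1))" for k
  proof -
    have "g ^ k = g ^ ((q-1) * (k div (q-1)) + k mod (q-1))" by (simp only: mult_div_mod_eq)
    also have "\<dots> = g ^ (k mod (q-1))" by (simp only: power_add power_mult pow_q1[OF g_ne0] power_one mult_1_left)
    finally show ?thesis .
  qed
  have "g ^ (i mod (q-1)) = g ^ (j mod (q-1)) \<longleftrightarrow> i mod (q-1) = j mod (q-1)"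
    using inj_onD[OF g_inj] q_ge by auto
  thus ?thesis using red[of i] red[of j] by simp
qed

lemma g_pow_eq1: "g ^ k = 1 \<longleftrightarrow> (q-1) dvd k"
  using g_pow_eq[of k 0] by (simp add: mod_eq_0_iff_dvd)

lemma Qk_eq: "Q ^ k = p ^ (r * k)" by (simp add: Q_def power_mult)

lemma Qk_add: "(x + y :: 'a) ^ (Q ^ k) = x ^ (Q ^ k) + y ^ (Q ^ k)" unfolding Qk_eq by (rule frob_add)
lemma Qk_diff: "(x - y :: 'a) ^ (Q ^ k) = x ^ (Q ^ k) - y ^ (Q ^ k)" unfolding Qk_eq by (rule frob_diff)
lemma Qk_neg: "(- x :: 'a) ^ (Q ^ k) = - (x ^ (Q ^ k))" unfolding Qk_eq by (rule frob_neg)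

definition Fp :: "'a set" where "Fp = {x. x ^ Q = x}"

lemma Fp_iff: "x \<in> Fp \<longleftrightarrow> x ^ Q = x" by (simp add: Fp_def)
lemma Fp_0: "0 \<in> Fp" using Q_ge3 by (simp add: Fp_def)
lemma Fp_1: "1 \<in> Fp" by (simp add: Fp_def)
lemma Fp_add: "x \<in> Fp \<Longrightarrow> y \<in> Fp \<Longrightarrow> x + y \<in> Fp" by (simp add: Fp_def Q_add)
lemma Fp_diff: "x \<in> Fp \<Longrightarrow> y \<in> Fp \<Longrightarrow> x - y \<in> Fp" by (simp add: Fp_def Q_diff)
lemma Fp_neg: "x \<in> Fp \<Longrightarrow> - x \<in> Fp" by (simp add: Fp_def Q_neg)
lemma Fp_mult: "x \<in> Fp \<Longrightarrow> y \<in> Fp \<Longrightarrow> x * y \<in> Fp" by (simp add: Fp_def power_mult_distrib)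
lemma Fp_inv: "x \<in> Fp \<Longrightarrow> inverse x \<in> Fp" by (simp add: Fp_def power_inverse)
lemma Fp_div: "x \<in> Fp \<Longrightarrow> y \<in> Fp \<Longrightarrow> x / y \<in> Fp" by (simp add: Fp_def power_divide)
lemma Fp_powk: "x \<in> Fp \<Longrightarrow> x ^ (Q ^ k) = x"
  by (induction k) (auto simp: Fp_def power_mult)
lemma Fp_pow: "x \<in> Fp \<Longrightarrow> x ^ n \<in> Fp"
  by (simp add: Fp_def flip: power_mult) (metis power_mult mult.commute)

lemma card_Fp_le: "card Fp \<le> Q"
proof -
  define P :: "'a poly" where "P = monom 1 Q - monom 1 1"
  have c: "coeff P Q = 1" using Q_ge3 by (simp add: P_def)
  hence "P \<noteq> 0" by auto
  have d: "degree P \<le> Q" unfolding P_def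
    by (intro degree_diff_le degree_monom_le order.trans[OF degree_monom_le]) (use Q_ge3 in auto)
  have "Fp = {x. poly P x = 0}" by (auto simp: Fp_def P_def poly_monom)
  thus ?thesis using card_poly_roots_bound[OF \<open>P \<noteq> 0\<close>] d by simp
qed

lemma q1_eq: "q - 1 = (Q - 1) * (Q^3 + Q^2 + Q + 1)"
proof -
  define M where "M = Q^3 + Q^2 + Q + 1"
  have "int (q - 1) = int Q ^ 4 - 1" using q_eq q_ge by (simp add: of_nat_diff)
  also have "\<dots> = (int Q - 1) * (int Q^3 + int Q^2 + int Q + 1)"
    by (simp add: power2_eq_square power3_eq_cube power4_eq_xxxx algebra_simps)
  also have "\<dots> = int (Q - 1) * int M" using Q_ge3 by (simp add: of_nat_diff M_def)
  also have "\<dots> = int ((Q - 1) * M)" by simp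
  finally show ?thesis unfolding M_def by linarith
qed

lemma pow_q1': "(x::'a) \<noteq> 0 \<Longrightarrow> x ^ (q - Suc 0) = 1" using pow_q1 by simp

lemma card_Fp: "card Fp = Q"
proof -
  define m where "m = Q^3 + Q^2 + Q + 1"
  have qm: "q - 1 = (Q - 1) * m" using q1_eq m_def by simp
  have sub: "insert 0 ((\<lambda>k. g ^ (m * k)) ` {..<Q-1}) \<subseteq> Fp"
  proof -
    have "g ^ (m * k) \<in> Fp" for k
    proof -
      have "(g ^ (m * k)) ^ Q = g ^ (m * k) * g ^ ((q - 1) * k)"
      proof -
        have "m * k * Q = m * k + (q-1) * k" using qm Q_ge3
          by (simp add: algebra_simps)
        thus ?thesis by (simp add: power_mult[symmetric] power_add[symmetric])
      qed
      also have "\<dots> = g ^ (m * k)" by (simp add: power_mult pow_q1' g_ne0)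
      finally show ?thesis by (simp add: Fp_def)
    qed
    thus ?thesis using Fp_0 by auto
  qed
  have inj: "inj_on (\<lambda>k. g ^ (m * k)) {..<Q-1}"
  proof (rule inj_onI)
    fix i j assume i: "i \<in> {..<Q-1}" and j: "j \<in> {..<Q-1}" and e: "g ^ (m * i) = g ^ (m * j)"
    have mpos: "m > 0" by (simp add: m_def)
    have "m * i < q - 1" "m * j < q - 1" using i j qm mpos by (auto simp: mult.commute)
    hence "m * i = m * j" using e g_pow_eq by simp
    thus "i = j" using mpos by simp
  qed
  have "card (insert 0 ((\<lambda>k. g ^ (m * k)) ` {..<Q-1})) = Q"
    using inj g_ne0 Q_ge3 by (subst card_insert_disjoint) (auto simp: card_image)
  hence "Q \<le> card Fp" using card_mono[OF _ sub] by simp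
  thus ?thesis using card_Fp_le by simp
qed

definition T :: "'a \<Rightarrow> 'a" where "T x = x + x ^ Q + x ^ (Q^2) + x ^ (Q^3)"

lemma T_add: "T (x + y) = T x + T y"
  using Qk_add[of x y 1] Qk_add[of x y 2] Qk_add[of x y 3] by (simp add: T_def algebra_simps)
lemma T_diff: "T (x - y) = T x - T y"
  using Qk_diff[of x y 1] Qk_diff[of x y 2] Qk_diff[of x y 3] by (simp add: T_def algebra_simps)
lemma T_neg: "T (- x) = - T x"
  using Qk_neg[of x 1] Qk_neg[of x 2] Qk_neg[of x 3] by (simp add: T_def algebra_simps)
lemma T_0: "T 0 = 0" using T_diff[of 0 0] by simp
lemma T_scal: "c \<in> Fp \<Longrightarrow> T (c * x) = c * T x"
  using Fp_powk[of c 1] Fp_powk[of c 2] Fp_powk[of c 3]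
  by (simp add: T_def power_mult_distrib algebra_simps)
lemma T_powQ: "T (x ^ Q) = T x"
proof -
  have "(x ^ Q) ^ (Q^3) = x" using pow_Q4[of x] by (simp flip: power_mult add: power4_eq_xxxx power3_eq_cube mult.assoc)
  moreover have "(x ^ Q) ^ Q = x ^ (Q^2)" "(x ^ Q) ^ (Q^2) = x ^ (Q^3)"
    by (simp_all flip: power_mult add: power2_eq_square power3_eq_cube mult.assoc)
  ultimately show ?thesis by (simp add: T_def algebra_simps)
qed
lemma T_Fp: "T x \<in> Fp"
proof -
  have "(T x) ^ Q = x ^ Q + (x ^ Q) ^ Q + (x ^ (Q^2)) ^ Q + (x ^ (Q^3)) ^ Q"
    unfolding T_def using Qk_add[where k=1] by simp
  also have "\<dots> = T (x ^ Q)"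
    by (simp add: T_def flip: power_mult add: power2_eq_square power3_eq_cube mult.assoc mult.commute)
  finally show ?thesis using T_powQ by (simp add: Fp_def)
qed
lemma T_powp: "T (x ^ p) = (T x) ^ p"
proof -
  have "(T x) ^ p = x ^ p + (x ^ Q) ^ p + (x ^ (Q^2)) ^ p + (x ^ (Q^3)) ^ p"
    unfolding T_def using frob_add[where n=1] by simp
  thus ?thesis by (simp add: T_def flip: power_mult add: mult.commute)
qed

lemma T_nonzero: "\<exists>x. T x \<noteq> 0"
proof (rule ccontr)
  assume "\<not> (\<exists>x. T x \<noteq> 0)"
  hence all: "\<forall>x. T x = 0" by simp
  define P :: "'a poly" where "P = monom 1 1 + monom 1 Q + monom 1 (Q^2) + monom 1 (Q^3)"
  have "Q * 1 < Q * Q" using Q_ge3 by (intro mult_strict_left_mono) auto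
  hence "Q < Q^2" by (simp add: power2_eq_square)
  have "(Q * Q) * 1 < (Q * Q) * Q" using Q_ge3 by (intro mult_strict_left_mono) auto
  hence "Q^2 < Q^3" by (simp add: power2_eq_square power3_eq_cube)
  have "Suc 0 \<noteq> Q^3" "Q \<noteq> Q^3" "Q^2 \<noteq> Q^3" using Q_ge3 \<open>Q < Q^2\<close> \<open>Q^2 < Q^3\<close> by linarith+
  hence c: "coeff P (Q^3) = 1" by (simp add: P_def)
  hence "P \<noteq> 0" by auto
  have "1 \<le> Q^3" "Q \<le> Q^3" "Q^2 \<le> Q^3" using \<open>Q < Q^2\<close> \<open>Q^2 < Q^3\<close> Q_ge3 by linarith+
  hence d: "degree P \<le> Q^3" unfolding P_def
    by (intro degree_add_le order.trans[OF degree_monom_le]) auto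
  have "UNIV = {x. poly P x = 0}" using all by (auto simp: T_def P_def poly_monom)
  hence "q \<le> Q^3" using card_poly_roots_bound[OF \<open>P \<noteq> 0\<close>] d by (simp add: q_def)
  moreover have "Q^3 < Q^4" using Q_ge3 by (intro power_strict_increasing) auto
  ultimately show False using q_eq by simp
qed

lemma T_surj: "u \<noteq> 0 \<Longrightarrow> \<exists>a. T (u * a) = 1"
proof -
  assume u: "u \<noteq> 0"
  obtain x where x: "T x \<noteq> 0" using T_nonzero by blast
  have "T (u * (inverse (T x) * x / u)) = T (inverse (T x) * x)" using u by simp
  also have "\<dots> = 1" using x by (simp add: T_scal Fp_inv T_Fp)
  finally show ?thesis by blast
qed

lemma T_scal': "c \<in> Fp \<Longrightarrow> T (u * (c * x)) = c * T (u * x)"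
  using T_scal[of c "u * x"] by (simp add: mult.left_commute)

lemma card_Tfun:
  assumes cla: "\<And>x y. x \<in> V \<Longrightarrow> y \<in> V \<Longrightarrow> x + y \<in> V"
    and cld: "\<And>x y. x \<in> V \<Longrightarrow> y \<in> V \<Longrightarrow> x - y \<in> V"
    and cls: "\<And>c x. c \<in> Fp \<Longrightarrow> x \<in> V \<Longrightarrow> c * x \<in> V"
    and a1: "a1 \<in> V" "T (w * a1) = 1"
  shows "card V = Q * card {a\<in>V. T (w * a) = 0}"
proof -
  have "card V = card ((\<lambda>a. T (w * a)) ` V) * card {a\<in>V. T (w * a) = 0}"
    by (rule card_fibers) (auto simp: cla cld distrib_left T_add)
  moreover have "(\<lambda>a. T (w * a)) ` V = Fp"
  proof
    show "(\<lambda>a. T (w * a)) ` V \<subseteq> Fp" using T_Fp by auto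
    show "Fp \<subseteq> (\<lambda>a. T (w * a)) ` V"
    proof
      fix c assume c: "c \<in> Fp"
      have "T (w * (c * a1)) = c" using T_scal'[OF c] a1 by simp
      thus "c \<in> (\<lambda>a. T (w * a)) ` V" using cls[OF c a1(1)] by (intro image_eqI[of _ _ "c * a1"]) auto
    qed
  qed
  ultimately show ?thesis using card_Fp by simp
qed

lemma card_H: "card {x. T x = 0} = Q ^ 3"
proof -
  obtain a1 where a1: "T (1 * a1) = 1" using T_surj[of 1] by auto
  have "card (UNIV :: 'a set) = Q * card {a\<in>UNIV. T (1 * a) = 0}"
    by (rule card_Tfun[OF _ _ _ _ a1]) auto
  hence "Q ^ 4 = Q * card {x. T x = 0}" using q_eq q_def by simp
  hence "Q * Q ^ 3 = Q * card {x. T x = 0}" by (simp add: power_Suc[symmetric] del: power_Suc)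
  thus ?thesis using Q_ge3 by simp
qed

lemma KER:
  assumes u: "u \<noteq> 0" and imp: "\<And>a. T (u * a) = 0 \<Longrightarrow> T (v * a) = 0"
  shows "\<exists>l\<in>Fp. v = l * u"
proof -
  obtain a0 where a0: "T (u * a0) = 1" using T_surj[OF u] by auto
  define l where "l = T (v * a0)"
  have key: "T ((v - l * u) * a) = 0" for a
  proof -
    define m where "m = T (u * a)"
    have m: "m \<in> Fp" using T_Fp by (simp add: m_def)
    have "T (u * (a - m * a0)) = 0"
      using T_scal'[OF m, of u a0] a0 by (simp add: right_diff_distrib T_diff m_def)
    hence "T (v * (a - m * a0)) = 0" by (rule imp)
    hence "T (v * a) = m * l" using T_scal'[OF m, of v a0] by (simp add: right_diff_distrib T_diff l_def)
    moreover have "T (l * u * a) = l * m" using T_scal[of l "u * a"] T_Fp by (simp add: l_def m_def mult.assoc)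
    moreover have "T ((v - l * u) * a) = T (v * a) - T (l * u * a)" by (simp only: left_diff_distrib T_diff)
    ultimately show ?thesis by (simp add: mult.commute)
  qed
  have "v - l * u = 0"
  proof (rule ccontr)
    assume "v - l * u \<noteq> 0"
    then obtain a where "T ((v - l * u) * a) = 1" using T_surj by blast
    thus False using key[of a] by simp
  qed
  thus ?thesis using T_Fp by (auto simp: l_def)
qed

lemma dual_basis:
  assumes h: "h \<notin> Fp"
  shows "\<exists>a1. T a1 = 1 \<and> T (h * a1) = 0" and "\<exists>a2. T a2 = 0 \<and> T (h * a2) = 1"
proof -
  have h0: "h \<noteq> 0" using h Fp_0 by auto
  have "\<exists>a. T (h * a) = 0 \<and> T a \<noteq> 0"
  proof (rule ccontr)
    assume "\<not> ?thesis"
    hence "\<And>a. T (h * a) = 0 \<Longrightarrow> T (1 * a) = 0" by auto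
    from KER[OF h0 this] obtain l where l: "l \<in> Fp" "1 = l * h" by auto
    hence "h = inverse l" by (metis mult_cancel_left1 nonzero_eq_divide_eq one_neq_zero inverse_eq_divide mult.commute divide_self_if)
    thus False using h Fp_inv[OF l(1)] by simp
  qed
  then obtain a where a: "T (h * a) = 0" "T a \<noteq> 0" by auto
  have "T (inverse (T a) * a) = 1" "T (h * (inverse (T a) * a)) = 0"
    using a T_scal[of "inverse (T a)" a] T_scal'[of "inverse (T a)" h a] Fp_inv[OF T_Fp] by auto
  thus "\<exists>a1. T a1 = 1 \<and> T (h * a1) = 0" by blast
  have "\<exists>a. T a = 0 \<and> T (h * a) \<noteq> 0"
  proof (rule ccontr)
    assume "\<not> ?thesis"
    hence "\<And>a. T (1 * a) = 0 \<Longrightarrow> T (h * a) = 0" by auto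
    hence "\<exists>l\<in>Fp. h = l * 1" by (intro KER) auto
    thus False using h by simp
  qed
  then obtain b where b: "T b = 0" "T (h * b) \<noteq> 0" by auto
  have "T (inverse (T (h * b)) * b) = 0" "T (h * (inverse (T (h * b)) * b)) = 1"
    using b T_scal[of "inverse (T (h * b))" b] T_scal'[of "inverse (T (h * b))" h b] Fp_inv[OF T_Fp] by auto
  thus "\<exists>a2. T a2 = 0 \<and> T (h * a2) = 1" by blast
qed

lemma KER2:
  assumes h: "h \<notin> Fp" and imp: "\<And>a. T a = 0 \<Longrightarrow> T (h * a) = 0 \<Longrightarrow> T (c * a) = 0"
  shows "\<exists>x y. x \<in> Fp \<and> y \<in> Fp \<and> c = x + h * y"
proof -
  obtain a1 where a1: "T a1 = 1" "T (h * a1) = 0" using dual_basis(1)[OF h] by auto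
  obtain a2 where a2: "T a2 = 0" "T (h * a2) = 1" using dual_basis(2)[OF h] by auto
  define l1 where "l1 = T (c * a1)"
  define l2 where "l2 = T (c * a2)"
  have l: "l1 \<in> Fp" "l2 \<in> Fp" using T_Fp by (auto simp: l1_def l2_def)
  have key: "T ((c - l1 - h * l2) * a) = 0" for a
  proof -
    define m1 where "m1 = T a"
    define m2 where "m2 = T (h * a)"
    have m: "m1 \<in> Fp" "m2 \<in> Fp" using T_Fp by (auto simp: m1_def m2_def)
    define b where "b = a - m1 * a1 - m2 * a2"
    have "T b = 0" using a1 a2 T_scal[OF m(1), of a1] T_scal[OF m(2), of a2]
      by (simp add: b_def T_diff m1_def)
    moreover have "T (h * b) = 0" using a1 a2 T_scal'[OF m(1), of h a1] T_scal'[OF m(2), of h a2]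
      by (simp add: b_def T_diff m2_def right_diff_distrib)
    ultimately have "T (c * b) = 0" by (rule imp)
    hence "T (c * a) = m1 * l1 + m2 * l2"
      using T_scal'[OF m(1), of c a1] T_scal'[OF m(2), of c a2]
      by (simp add: b_def T_diff T_add right_diff_distrib l1_def l2_def algebra_simps)
    moreover have "T ((l1 + h * l2) * a) = l1 * m1 + l2 * m2"
      using T_scal[OF l(1), of a] T_scal'[OF l(2), of h a]
      by (simp add: distrib_right T_add m1_def m2_def mult.assoc mult.left_commute)
    ultimately show ?thesis by (simp add: left_diff_distrib T_diff algebra_simps)
  qed
  have "c - l1 - h * l2 = 0"
  proof (rule ccontr)
    assume "c - l1 - h * l2 \<noteq> 0"
    then obtain a where "T ((c - l1 - h * l2) * a) = 1" using T_surj by blast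
    thus False using key[of a] by simp
  qed
  hence "c = l1 + h * l2" by (simp add: algebra_simps)
  thus ?thesis using l by blast
qed

lemma card_R:
  assumes h: "h \<notin> Fp"
  shows "card {a. T a = 0 \<and> T (h * a) = 0} = Q ^ 2"
proof -
  have h0: "h \<noteq> 0" using h Fp_0 by auto
  obtain a1 where a1: "T a1 = 1" "T (h * a1) = 0" using dual_basis(1)[OF h] by auto
  define V where "V = {a. T (h * a) = 0}"
  have "card V = Q * card {a\<in>V. T (1 * a) = 0}"
    by (rule card_Tfun[of V a1 1])
       (use a1 in \<open>auto simp: V_def distrib_left T_add right_diff_distrib T_diff T_scal' T_scal mult.left_commute\<close>)
  moreover have "card V = Q ^ 3"
  proof -
    have "bij_betw (\<lambda>a. h * a) V {x. T x = 0}"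
      by (rule bij_betw_byWitness[of _ "\<lambda>x. x / h"]) (use h0 in \<open>auto simp: V_def\<close>)
    thus ?thesis using card_H bij_betw_same_card by fastforce
  qed
  moreover have "{a\<in>V. T (1 * a) = 0} = {a. T a = 0 \<and> T (h * a) = 0}" by (auto simp: V_def)
  ultimately have "Q * Q^2 = Q * card {a. T a = 0 \<and> T (h * a) = 0}"
    by (simp add: power_Suc[symmetric] del: power_Suc)
  thus ?thesis using Q_ge3 by simp
qed

definition t where "t = Q div 2"
lemma Q_t: "Q = 2 * t + 1" using Q_odd by (simp add: t_def)
definition M4 where "M4 = (t + 1) * (2 * t^2 + 2 * t + 1)"
definition e where "e = (q - 1) div 4"

lemma q1_4: "q - 1 = 4 * ((Q - 1) * M4)"
proof -
  have "int q = (2 * int t + 1) ^ 4" using q_eq Q_t by (simp add: add.commute)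
  hence "int q - 1 = 4 * ((2 * int t) * ((int t + 1) * (2 * int t^2 + 2 * int t + 1)))"
    by (simp add: power2_eq_square power4_eq_xxxx algebra_simps)
  moreover have "int (4 * ((Q - 1) * M4)) = 4 * ((2 * int t) * ((int t + 1) * (2 * int t^2 + 2 * int t + 1)))"
    using Q_t by (simp add: M4_def power2_eq_square algebra_simps)
  moreover have "int (q - 1) = int q - 1" using q_ge by simp
  ultimately show ?thesis by linarith
qed

lemma e_eq: "e = (Q - 1) * M4" using q1_4 by (simp add: e_def)
lemma q1_e: "q - 1 = 4 * e" using q1_4 e_eq by simp
lemma e_even: "even e" using e_eq Q_odd by simp
lemma e_pos: "e > 0" using e_eq Q_ge3 by (simp add: M4_def)

definition iota where "iota = g ^ e"
definition chi :: "'a \<Rightarrow> 'a" where "chi x = x ^ e"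

lemma two_ne0: "(2::'a) \<noteq> 0"
proof
  assume "(2::'a) = 0"
  hence "of_nat 2 = (0::'a)" by simp
  hence "CHAR('a) dvd 2" by (simp only: of_nat_eq_0_iff_char_dvd)
  thus False using CHAR_eq p_ge3 by (auto dest: dvd_imp_le)
qed

lemma one_ne_m1: "(1::'a) \<noteq> -1"
  using two_ne0 by (metis add_eq_0_iff_both_eq_0 one_add_one neg_eq_iff_add_eq_0 not_one_le_zero)

lemma iota4: "iota ^ 4 = 1"
  using q1_e pow_q1[OF g_ne0] by (simp add: iota_def flip: power_mult) (simp add: mult.commute)

lemma iota2: "iota ^ 2 = -1"
proof -
  have "(iota ^ 2) ^ 2 = 1" using iota4 by (simp flip: power_mult)
  hence "iota ^ 2 = 1 \<or> iota ^ 2 = -1" using power2_eq_1_iff[of "iota ^ 2"] by blast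
  moreover have "iota ^ 2 \<noteq> 1"
  proof
    assume "iota ^ 2 = 1"
    hence "g ^ (2 * e) = 1" by (simp add: iota_def flip: power_mult) (simp add: mult.commute)
    hence "(q - 1) dvd (2 * e)" using g_pow_eq1 by simp
    thus False using q1_e e_pos by (auto dest: dvd_imp_le)
  qed
  ultimately show ?thesis by simp
qed

lemma iota_ne: "iota \<noteq> 1" "iota \<noteq> -1" "iota \<noteq> 0" "iota \<noteq> - iota" "1 \<noteq> - iota" "-1 \<noteq> - iota"
proof -
  show "iota \<noteq> 1" using iota2 one_ne_m1 by auto
  show "iota \<noteq> -1" using iota2 one_ne_m1 by auto
  show i0: "iota \<noteq> 0" using iota2 one_ne_m1 by auto
  show "iota \<noteq> - iota"
  proof
    assume "iota = - iota"
    hence "2 * iota = 0" by (metis mult_2 add.right_inverse)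
    thus False using i0 two_ne0 by simp
  qed
  show "1 \<noteq> - iota" using \<open>iota \<noteq> -1\<close> by (metis minus_minus)
  show "-1 \<noteq> - iota" using \<open>iota \<noteq> 1\<close> by auto
qed

lemma iota_pow: "iota ^ k = iota ^ (k mod 4)"
proof -
  have "iota ^ k = iota ^ (4 * (k div 4) + k mod 4)" by (simp only: mult_div_mod_eq)
  also have "\<dots> = iota ^ (k mod 4)" by (simp only: power_add power_mult iota4 power_one mult_1_left)
  finally show ?thesis .
qed

lemma iota_pow_cases:
  "iota ^ k = 1 \<longleftrightarrow> k mod 4 = 0" "iota ^ k = iota \<longleftrightarrow> k mod 4 = 1"
  "iota ^ k = -1 \<longleftrightarrow> k mod 4 = 2" "iota ^ k = - iota \<longleftrightarrow> k mod 4 = 3"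
proof -
  have i3: "iota ^ 3 = - iota" using iota2 by (simp add: power3_eq_cube power2_eq_square)
  have "k mod 4 < 4" by simp
  hence "k mod 4 = 0 \<or> k mod 4 = 1 \<or> k mod 4 = 2 \<or> k mod 4 = 3" by linarith
  thus "iota ^ k = 1 \<longleftrightarrow> k mod 4 = 0" "iota ^ k = iota \<longleftrightarrow> k mod 4 = 1"
    "iota ^ k = -1 \<longleftrightarrow> k mod 4 = 2" "iota ^ k = - iota \<longleftrightarrow> k mod 4 = 3"
    using iota_pow[of k] iota2 i3 iota_ne one_ne_m1 by (auto simp: eq_commute[of "-1" "- iota"])
qed

lemma chi_g: "chi (g ^ k) = iota ^ k"
  by (simp add: chi_def iota_def flip: power_mult) (simp add: mult.commute)

lemma chi_mult: "chi (x * y) = chi x * chi y" by (simp add: chi_def power_mult_distrib)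

lemma chi_cases: "x \<noteq> 0 \<Longrightarrow> chi x = 1 \<or> chi x = iota \<or> chi x = -1 \<or> chi x = - iota"
proof -
  assume "x \<noteq> 0"
  then obtain k where "x = g ^ k" using prim unfolding primitive_root_def by auto
  hence "chi x = iota ^ k" by (simp add: chi_g)
  moreover have "k mod 4 = 0 \<or> k mod 4 = 1 \<or> k mod 4 = 2 \<or> k mod 4 = 3" by linarith
  ultimately show ?thesis using iota_pow_cases[of k] by auto
qed

lemma chi_Fp: "l \<in> Fp \<Longrightarrow> l \<noteq> 0 \<Longrightarrow> chi l = 1"
proof -
  assume l: "l \<in> Fp" "l \<noteq> 0"
  have "l * l ^ (Q - 1) = l * 1" using l Q_ge3 by (simp add: Fp_def flip: power_Suc)
  hence "l ^ (Q - 1) = 1" using l by simp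
  thus ?thesis by (simp add: chi_def e_eq power_mult)
qed

lemma chi_m1: "chi (-1) = 1" using e_even by (simp add: chi_def)

lemma chi_neg: "chi (- x) = chi x" using chi_mult[of "-1" x] chi_m1 by simp

lemma chi_powp: "chi (x ^ p) = chi x ^ p" by (simp add: chi_def flip: power_mult) (simp add: mult.commute)
lemma chi_powQ: "chi (x ^ Q) = chi x ^ Q" by (simp add: chi_def flip: power_mult) (simp add: mult.commute)

lemma iota_p: "iota ^ p = - iota"
proof -
  have "iota ^ p = iota ^ (p mod 4)" by (rule iota_pow)
  thus ?thesis using p_mod iota2 by (simp add: power3_eq_cube power2_eq_square)
qed

lemma chi_powp_cases:
  "chi x = iota \<Longrightarrow> chi (x ^ p) = - iota" "chi x = - iota \<Longrightarrow> chi (x ^ p) = iota"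
  using iota_p p_odd by (auto simp: chi_powp power_minus_odd)

lemma chi_powQ_pm: "chi x = 1 \<or> chi x = -1 \<Longrightarrow> chi (x ^ Q) = chi x"
  using Q_odd by (auto simp: chi_powQ power_minus_odd)

lemma peisert_adj_iff: "peisert_adj g x y \<longleftrightarrow> x \<noteq> y \<and> (chi (x - y) = 1 \<or> chi (x - y) = iota)"
proof
  assume "peisert_adj g x y"
  hence j0: "x \<noteq> y" "\<exists>j. (j mod 4 = 0 \<or> j mod 4 = 1) \<and> x - y = g ^ j"
    unfolding peisert_adj_def by simp_all
  from j0(2) obtain j where j: "j mod 4 = 0 \<or> j mod 4 = 1" "x - y = g ^ j" by metis
  thus "x \<noteq> y \<and> (chi (x - y) = 1 \<or> chi (x - y) = iota)" using j0(1) iota_pow_cases[of j] by (auto simp: chi_g)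
next
  assume a: "x \<noteq> y \<and> (chi (x - y) = 1 \<or> chi (x - y) = iota)"
  then obtain k where k: "x - y = g ^ k" using prim unfolding primitive_root_def by (metis right_minus_eq)
  hence "k mod 4 = 0 \<or> k mod 4 = 1" using a iota_pow_cases[of k] by (auto simp: chi_g)
  hence "(k mod 4 = 0 \<or> k mod 4 = 1) \<and> x - y = g ^ k" using k by simp
  hence "\<exists>j. (j mod 4 = 0 \<or> j mod 4 = 1) \<and> x - y = g ^ j" by (rule exI)
  thus "peisert_adj g x y" using a unfolding peisert_adj_def by simp
qed

lemma class_image: "j < 4 \<Longrightarrow> {x. x \<noteq> 0 \<and> chi x = iota ^ j} = (\<lambda>k. g ^ (4 * k + j)) ` {..<e}"
proof
  assume j: "j < 4"
  show "(\<lambda>k. g ^ (4 * k + j)) ` {..<e} \<subseteq> {x. x \<noteq> 0 \<and> chi x = iota ^ j}"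
  proof
    fix x assume "x \<in> (\<lambda>k. g ^ (4 * k + j)) ` {..<e}"
    then obtain k where "x = g ^ (4 * k + j)" by auto
    moreover have "iota ^ (4 * k + j) = iota ^ j" using iota_pow[of "4 * k + j"] iota_pow[of j] by simp
    ultimately show "x \<in> {x. x \<noteq> 0 \<and> chi x = iota ^ j}" using g_ne0 by (simp add: chi_g)
  qed
  show "{x. x \<noteq> 0 \<and> chi x = iota ^ j} \<subseteq> (\<lambda>k. g ^ (4 * k + j)) ` {..<e}"
  proof
    fix x assume x: "x \<in> {x. x \<noteq> 0 \<and> chi x = iota ^ j}"
    then obtain k where k: "x = g ^ k" using prim unfolding primitive_root_def by auto
    define k' where "k' = k mod (q - 1)"
    have xk': "x = g ^ k'" using k g_pow_eq[of k k'] by (simp add: k'_def)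
    have "k' < 4 * e" using q1_e e_pos by (simp add: k'_def)
    have "iota ^ k' = iota ^ j" using x xk' chi_g by simp
    moreover have "j = 0 \<or> j = 1 \<or> j = 2 \<or> j = 3" using j by auto
    ultimately have "k' mod 4 = j" using iota_pow_cases[of k'] iota2
      by (auto simp: power3_eq_cube power2_eq_square)
    hence "k' = 4 * (k' div 4) + j" by presburger
    moreover have "k' div 4 < e" using \<open>k' < 4 * e\<close> by auto
    ultimately show "x \<in> (\<lambda>k. g ^ (4 * k + j)) ` {..<e}" using xk' by (intro image_eqI[of _ _ "k' div 4"]) auto
  qed
qed

lemma card_class: "j < 4 \<Longrightarrow> card {x. x \<noteq> 0 \<and> chi x = iota ^ j} = e"
proof -
  assume j: "j < 4"
  have "inj_on (\<lambda>k. g ^ (4 * k + j)) {..<e}"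
  proof (rule inj_onI)
    fix a b assume a: "a \<in> {..<e}" and b: "b \<in> {..<e}" and eq: "g ^ (4 * a + j) = g ^ (4 * b + j)"
    have "4 * a + j < q - 1" "4 * b + j < q - 1" using a b j q1_e by auto
    thus "a = b" using eq g_pow_eq by simp
  qed
  thus ?thesis using class_image[OF j] by (simp add: card_image)
qed

lemma card_class_vals:
  "card {x. x \<noteq> 0 \<and> chi x = 1} = e" "card {x. x \<noteq> 0 \<and> chi x = iota} = e"
  "card {x. x \<noteq> 0 \<and> chi x = -1} = e" "card {x. x \<noteq> 0 \<and> chi x = - iota} = e"
  using card_class[of 0] card_class[of 1] card_class[of 2] card_class[of 3] iota2
  by (simp_all add: power3_eq_cube power2_eq_square)



lemma vals_ne: "(1::'a) \<noteq> iota" "(1::'a) \<noteq> -1" "(1::'a) \<noteq> - iota" "iota \<noteq> -1" "iota \<noteq> - iota" "(-1::'a) \<noteq> - iota"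
  using iota_ne one_ne_m1 by metis+

lemma chi_ne0: "x \<noteq> 0 \<Longrightarrow> chi x \<noteq> 0" by (simp add: chi_def)

definition Cset :: "'a set" where "Cset = {x. x \<noteq> 0 \<and> (chi x = 1 \<or> chi x = iota)}"
definition mv :: "'a \<Rightarrow> nat" where "mv z = card {y. T y = 0 \<and> y \<noteq> 0 \<and> chi y = z}"
definition Vf :: "'a \<Rightarrow> nat" where "Vf a = card {c \<in> Cset. T (a * c) = 0}"

lemma card_union2:
  assumes "z1 \<noteq> z2"
  shows "card {y. P y \<and> (chi y = z1 \<or> chi y = z2)} = card {y. P y \<and> chi y = z1} + card {y. P y \<and> chi y = z2}"
proof -
  have "{y. P y \<and> (chi y = z1 \<or> chi y = z2)} = {y. P y \<and> chi y = z1} \<union> {y. P y \<and> chi y = z2}" by auto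
  thus ?thesis using assms by (simp add: card_Un_disjoint disjoint_iff)
qed

lemma card_Cset: "card Cset = 2 * e"
proof -
  have "card Cset = card {x. x \<noteq> 0 \<and> chi x = 1} + card {x. x \<noteq> 0 \<and> chi x = iota}"
    unfolding Cset_def by (rule card_union2[OF vals_ne(1)])
  thus ?thesis using card_class_vals by simp
qed

lemma m_sum: "mv 1 + mv iota + mv (-1) + mv (- iota) = Q ^ 3 - 1"
proof -
  have "{y. T y = 0 \<and> y \<noteq> 0} = {y. T y = 0 \<and> y \<noteq> 0 \<and> chi y = 1} \<union> {y. T y = 0 \<and> y \<noteq> 0 \<and> chi y = iota}
      \<union> {y. T y = 0 \<and> y \<noteq> 0 \<and> chi y = -1} \<union> {y. T y = 0 \<and> y \<noteq> 0 \<and> chi y = - iota}"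
    using chi_cases by auto
  hence "card {y. T y = 0 \<and> y \<noteq> 0} = mv 1 + mv iota + mv (-1) + mv (- iota)"
    unfolding mv_def using vals_ne by (simp add: card_Un_disjoint disjoint_iff)
  moreover have "card {y. T y = 0 \<and> y \<noteq> 0} = Q ^ 3 - 1"
  proof -
    have "{y. T y = 0 \<and> y \<noteq> 0} = {y. T y = 0} - {0}" by auto
    thus ?thesis using card_H T_0 by simp
  qed
  ultimately show ?thesis by simp
qed

lemma frob_inj: "inj (\<lambda>x::'a. x ^ p)"
proof (rule injI)
  fix x y :: 'a assume "x ^ p = y ^ p"
  hence "(x - y) ^ (p ^ 1) = 0" using frob_diff[of x y 1] by simp
  thus "x = y" by simp
qed

lemma m_conj: "mv iota = mv (- iota)"
proof -
  have le: "mv z1 \<le> mv z2" if h: "\<And>y. chi y = z1 \<Longrightarrow> chi (y ^ p) = z2" for z1 z2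
  proof -
    have "card {y. T y = 0 \<and> y \<noteq> 0 \<and> chi y = z1} \<le> card {y. T y = 0 \<and> y \<noteq> 0 \<and> chi y = z2}"
    proof (rule card_inj_on_le[of "\<lambda>x. x ^ p"])
      show "inj_on (\<lambda>x. x ^ p) {y. T y = 0 \<and> y \<noteq> 0 \<and> chi y = z1}" using frob_inj by (auto simp: inj_on_def)
      show "(\<lambda>x. x ^ p) ` {y. T y = 0 \<and> y \<noteq> 0 \<and> chi y = z1} \<subseteq> {y. T y = 0 \<and> y \<noteq> 0 \<and> chi y = z2}"
        using h p_ge3 by (auto simp: T_powp)
    qed auto
    thus ?thesis by (simp add: mv_def)
  qed
  show ?thesis using le[of iota "- iota"] le[of "- iota" iota] chi_powp_cases by fastforce
qed

lemma Vf_val: "a \<noteq> 0 \<Longrightarrow> Vf a = mv (chi a) + mv (chi a * iota)"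
proof -
  assume a: "a \<noteq> 0"
  have ne: "chi a \<noteq> chi a * iota" using chi_ne0[OF a] iota_ne(1) by simp
  have "bij_betw (\<lambda>c. a * c) {c \<in> Cset. T (a * c) = 0} {y. (T y = 0 \<and> y \<noteq> 0) \<and> (chi y = chi a \<or> chi y = chi a * iota)}"
  proof (rule bij_betw_byWitness[of _ "\<lambda>y. y / a"])
    show "\<forall>x\<in>{c \<in> Cset. T (a * c) = 0}. a * x / a = x" using a by simp
    show "\<forall>y\<in>{y. (T y = 0 \<and> y \<noteq> 0) \<and> (chi y = chi a \<or> chi y = chi a * iota)}. a * (y / a) = y" using a by simp
    show "(\<lambda>c. a * c) ` {c \<in> Cset. T (a * c) = 0} \<subseteq> {y. (T y = 0 \<and> y \<noteq> 0) \<and> (chi y = chi a \<or> chi y = chi a * iota)}"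
      using a by (auto simp: Cset_def chi_mult)
    show "(\<lambda>y. y / a) ` {y. (T y = 0 \<and> y \<noteq> 0) \<and> (chi y = chi a \<or> chi y = chi a * iota)} \<subseteq> {c \<in> Cset. T (a * c) = 0}"
    proof
      fix z assume "z \<in> (\<lambda>y. y / a) ` {y. (T y = 0 \<and> y \<noteq> 0) \<and> (chi y = chi a \<or> chi y = chi a * iota)}"
      then obtain y where y: "T y = 0" "y \<noteq> 0" "chi y = chi a \<or> chi y = chi a * iota" "z = y / a" by auto
      have "chi y = chi a * chi z" using a y(4) chi_mult[of a z] by simp
      hence "chi z = 1 \<or> chi z = iota" using y(3) chi_ne0[OF a] by auto
      thus "z \<in> {c \<in> Cset. T (a * c) = 0}" using y a by (auto simp: Cset_def)
    qed
  qed
  hence "Vf a = card {y. (T y = 0 \<and> y \<noteq> 0) \<and> (chi y = chi a \<or> chi y = chi a * iota)}"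
    unfolding Vf_def by (rule bij_betw_same_card)
  also have "\<dots> = mv (chi a) + mv (chi a * iota)"
    unfolding mv_def using card_union2[OF ne, of "\<lambda>y. T y = 0 \<and> y \<noteq> 0"] by simp
  finally show ?thesis .
qed

definition Xv where "Xv = mv (-1) + mv iota"
definition Yv where "Yv = mv 1 + mv iota"

lemma Vf_D: "a \<noteq> 0 \<Longrightarrow> chi a = iota \<or> chi a = -1 \<Longrightarrow> Vf a = Xv"
  using Vf_val[of a] m_conj iota2 by (auto simp: Xv_def power2_eq_square)

lemma Vf_B: "a \<noteq> 0 \<Longrightarrow> chi a = 1 \<or> chi a = - iota \<Longrightarrow> Vf a = Yv"
  using Vf_val[of a] m_conj iota2 by (auto simp: Yv_def power2_eq_square)

lemma XY_sum: "Xv + Yv = Q ^ 3 - 1"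
  using m_sum m_conj by (simp add: Xv_def Yv_def)

definition Dset :: "'a set" where "Dset = {a. a \<noteq> 0 \<and> (chi a = iota \<or> chi a = -1)}"
definition Bset :: "'a set" where "Bset = {a. a \<noteq> 0 \<and> (chi a = 1 \<or> chi a = - iota)}"

lemma card_Dset: "card Dset = 2 * e"
  using card_union2[OF vals_ne(4), of "\<lambda>a. a \<noteq> 0"] card_class_vals by (simp add: Dset_def)
lemma card_Bset: "card Bset = 2 * e"
  using card_union2[OF vals_ne(3), of "\<lambda>a. a \<noteq> 0"] card_class_vals by (simp add: Bset_def)
lemma DB_part: "UNIV - {0} = Dset \<union> Bset" "Dset \<inter> Bset = {}"
  using chi_cases vals_ne by (auto simp: Dset_def Bset_def)

lemma sum_Vf_sq: "(\<Sum>a\<in>UNIV - {0}. (Vf a) ^ 2) = 2 * e * (Xv ^ 2 + Yv ^ 2)"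
proof -
  have "(\<Sum>a\<in>UNIV - {0}. (Vf a) ^ 2) = (\<Sum>a\<in>Dset. (Vf a) ^ 2) + (\<Sum>a\<in>Bset. (Vf a) ^ 2)"
    unfolding DB_part(1) by (rule sum.union_disjoint) (use DB_part(2) in auto)
  also have "(\<Sum>a\<in>Dset. (Vf a) ^ 2) = (\<Sum>a\<in>Dset. Xv ^ 2)" by (rule sum.cong) (auto simp: Dset_def Vf_D)
  also have "(\<Sum>a\<in>Bset. (Vf a) ^ 2) = (\<Sum>a\<in>Bset. Yv ^ 2)" by (rule sum.cong) (auto simp: Bset_def Vf_B)
  finally show ?thesis using card_Dset card_Bset by (simp add: algebra_simps)
qed

definition Ncc where "Ncc c c' = card {a. T (a * c) = 0 \<and> T (a * c') = 0}"

lemma sum_Vf_sq2: "(\<Sum>a\<in>UNIV - {0}. (Vf a) ^ 2) = (\<Sum>c\<in>Cset. \<Sum>c'\<in>Cset. (Ncc c c' - 1))"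
proof -
  define ind where "ind a c = (of_bool (T (a * c) = 0) :: nat)" for a c
  have V: "Vf a = (\<Sum>c\<in>Cset. ind a c)" for a
  proof -
    have "(\<Sum>c\<in>Cset. ind a c) = card (Cset \<inter> {c. T (a * c) = 0})"
      unfolding ind_def by simp
    thus ?thesis unfolding Vf_def by (simp add: Int_def)
  qed
  have "(\<Sum>a\<in>UNIV - {0}. (Vf a) ^ 2) = (\<Sum>a\<in>UNIV - {0}. (\<Sum>c\<in>Cset. ind a c) * (\<Sum>c'\<in>Cset. ind a c'))"
    by (simp only: V power2_eq_square)
  also have "\<dots> = (\<Sum>a\<in>UNIV - {0}. \<Sum>c\<in>Cset. \<Sum>c'\<in>Cset. ind a c * ind a c')"
    by (simp only: sum_product)
  also have "\<dots> = (\<Sum>c\<in>Cset. \<Sum>a\<in>UNIV - {0}. \<Sum>c'\<in>Cset. ind a c * ind a c')" by (rule sum.swap)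
  also have "\<dots> = (\<Sum>c\<in>Cset. \<Sum>c'\<in>Cset. \<Sum>a\<in>UNIV - {0}. ind a c * ind a c')"
    by (rule sum.cong[OF refl]) (rule sum.swap)
  also have "\<dots> = (\<Sum>c\<in>Cset. \<Sum>c'\<in>Cset. (Ncc c c' - 1))"
  proof (intro sum.cong[OF refl])
    fix c c'
    have "(\<Sum>a\<in>UNIV - {0}. ind a c * ind a c') = (\<Sum>a\<in>UNIV - {0}. of_bool (T (a * c) = 0 \<and> T (a * c') = 0))"
      by (rule sum.cong[OF refl]) (simp add: ind_def)
    also have "\<dots> = card ((UNIV - {0}) \<inter> {a. T (a * c) = 0 \<and> T (a * c') = 0})"
      by simp
    also have "(UNIV - {0}) \<inter> {a. T (a * c) = 0 \<and> T (a * c') = 0} = {a. T (a * c) = 0 \<and> T (a * c') = 0} - {0}"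
      by blast
    also have "card \<dots> = Ncc c c' - 1" using T_0 by (simp add: Ncc_def)
    finally show "(\<Sum>a\<in>UNIV - {0}. ind a c * ind a c') = Ncc c c' - 1" .
  qed
  finally show ?thesis .
qed

lemma card_Hc: "c \<noteq> 0 \<Longrightarrow> card {a. T (a * c) = 0} = Q ^ 3"
proof -
  assume c: "c \<noteq> 0"
  have "bij_betw (\<lambda>a. a * c) {a. T (a * c) = 0} {x. T x = 0}"
    by (rule bij_betw_byWitness[of _ "\<lambda>x. x / c"]) (use c in auto)
  thus ?thesis using card_H bij_betw_same_card by fastforce
qed

lemma Ncc_val:
  assumes c: "c \<noteq> 0" and c': "c' \<noteq> 0"
  shows "Ncc c c' = (if \<exists>l\<in>Fp. c' = l * c then Q ^ 3 else Q ^ 2)"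
proof (cases "\<exists>l\<in>Fp. c' = l * c")
  case True
  then obtain l where l: "l \<in> Fp" "c' = l * c" by auto
  have "{a. T (a * c) = 0 \<and> T (a * c') = 0} = {a. T (a * c) = 0}"
    using l T_scal'[OF l(1), of a c for a] by (auto simp: mult.left_commute)
  thus ?thesis using True card_Hc[OF c] by (simp add: Ncc_def)
next
  case False
  define h where "h = c' / c"
  have h: "h \<notin> Fp"
  proof
    assume "h \<in> Fp"
    hence "c' = h * c" using c by (simp add: h_def)
    thus False using False \<open>h \<in> Fp\<close> by blast
  qed
  have "bij_betw (\<lambda>a. a * c) {a. T (a * c) = 0 \<and> T (a * c') = 0} {b. T b = 0 \<and> T (h * b) = 0}"
    by (rule bij_betw_byWitness[of _ "\<lambda>x. x / c"]) (use c in \<open>auto simp: h_def mult.commute\<close>)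
  hence "Ncc c c' = Q ^ 2" using card_R[OF h] bij_betw_same_card unfolding Ncc_def by fastforce
  thus ?thesis using False by simp
qed

lemma card_Fp0: "card (Fp - {0}) = Q - 1" using card_Fp Fp_0 by (simp add: card_Diff_subset)

lemma sum_Ncc:
  assumes c: "c \<in> Cset"
  shows "(\<Sum>c'\<in>Cset. (Ncc c c' - 1)) = (Q - 1) * (Q ^ 3 - 1) + (2 * e - (Q - 1)) * (Q ^ 2 - 1)"
proof -
  have c0: "c \<noteq> 0" using c by (simp add: Cset_def)
  define L where "L = {c'\<in>Cset. \<exists>l\<in>Fp. c' = l * c}"
  have L_eq: "L = (\<lambda>l. l * c) ` (Fp - {0})"
  proof
    show "L \<subseteq> (\<lambda>l. l * c) ` (Fp - {0})" by (auto simp: L_def Cset_def)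
    show "(\<lambda>l. l * c) ` (Fp - {0}) \<subseteq> L"
      using c c0 by (auto simp: L_def Cset_def chi_mult chi_Fp)
  qed
  have cardL: "card L = Q - 1"
    unfolding L_eq using c0 by (subst card_image) (auto simp: inj_on_def card_Fp0)
  have LC: "L \<subseteq> Cset" by (auto simp: L_def)
  have "(\<Sum>c'\<in>Cset. (Ncc c c' - 1)) = (\<Sum>c'\<in>L. (Ncc c c' - 1)) + (\<Sum>c'\<in>Cset - L. (Ncc c c' - 1))"
    using sum.subset_diff[OF LC finite, of "\<lambda>c'. Ncc c c' - 1"] by (simp add: add.commute)
  also have "(\<Sum>c'\<in>L. (Ncc c c' - 1)) = (\<Sum>c'\<in>L. Q ^ 3 - 1)"
    by (rule sum.cong) (auto simp: L_def Cset_def Ncc_val c0)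
  also have "(\<Sum>c'\<in>Cset - L. (Ncc c c' - 1)) = (\<Sum>c'\<in>Cset - L. Q ^ 2 - 1)"
    by (rule sum.cong) (auto simp: L_def Cset_def Ncc_val c0)
  finally show ?thesis using cardL card_Cset LC by (simp add: card_Diff_subset)
qed

lemma second_moment: "Xv ^ 2 + Yv ^ 2 = (Q - 1) * (Q ^ 3 - 1) + (2 * e - (Q - 1)) * (Q ^ 2 - 1)"
proof -
  have "2 * e * (Xv ^ 2 + Yv ^ 2) = (\<Sum>c\<in>Cset. (Q - 1) * (Q ^ 3 - 1) + (2 * e - (Q - 1)) * (Q ^ 2 - 1))"
    using sum_Vf_sq sum_Vf_sq2 sum_Ncc by simp
  also have "\<dots> = 2 * e * ((Q - 1) * (Q ^ 3 - 1) + (2 * e - (Q - 1)) * (Q ^ 2 - 1))" using card_Cset by simp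
  finally show ?thesis using e_pos by simp
qed

lemma XY_diff_sq: "(int Xv - int Yv) ^ 2 = (int Q * (int Q - 1)) ^ 2"
proof -
  have Q1: "Q \<ge> 1" using Q_ge3 by simp
  have Q3: "Q ^ 3 \<ge> 1" "Q ^ 2 \<ge> 1" using Q1 by auto
  have iq: "int (q - 1) = int q - 1" using q_ge by simp
  have e4: "4 * int e = int Q ^ 4 - 1"
  proof -
    have "int (q - 1) = int (4 * e)" using q1_e by simp
    thus ?thesis using iq q_eq by simp
  qed
  have "2 * e \<ge> Q - 1"
  proof -
    have "Q - 1 \<le> (Q - 1) * M4" using Q_ge3 by (simp add: M4_def)
    thus ?thesis using e_eq by simp
  qed
  have d1: "int (Q - 1) = int Q - 1" using Q1 by simp
  have d2: "int (Q ^ 3 - 1) = int Q ^ 3 - 1" using Q3 by simp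
  have d3: "int (Q ^ 2 - 1) = int Q ^ 2 - 1" using Q3 by simp
  have d4: "int (2 * e - (Q - 1)) = 2 * int e - (int Q - 1)" using \<open>2 * e \<ge> Q - 1\<close> d1 by simp
  have s: "int Xv + int Yv = int Q ^ 3 - 1"
  proof -
    have "int (Xv + Yv) = int (Q ^ 3 - 1)" using XY_sum by simp
    thus ?thesis using d2 by simp
  qed
  have m: "int Xv ^ 2 + int Yv ^ 2 = (int Q - 1) * (int Q ^ 3 - 1) + (2 * int e - (int Q - 1)) * (int Q ^ 2 - 1)"
  proof -
    have "int (Xv ^ 2 + Yv ^ 2) = int ((Q - 1) * (Q ^ 3 - 1) + (2 * e - (Q - 1)) * (Q ^ 2 - 1))"
      using second_moment by simp
    also have "\<dots> = int (Q - 1) * int (Q ^ 3 - 1) + int (2 * e - (Q - 1)) * int (Q ^ 2 - 1)"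
      by (simp only: of_nat_add of_nat_mult)
    finally show ?thesis unfolding d1 d2 d3 d4 by simp
  qed
  have "(int Xv - int Yv) ^ 2 = 2 * (int Xv ^ 2 + int Yv ^ 2) - (int Xv + int Yv) ^ 2"
    by (simp add: power2_eq_square algebra_simps)
  also have "\<dots> = 2 * ((int Q - 1) * (int Q ^ 3 - 1)) + (4 * int e - 2 * (int Q - 1)) * (int Q ^ 2 - 1) - (int Q ^ 3 - 1) ^ 2"
    unfolding m s by (simp add: algebra_simps)
  also have "\<dots> = (int Q * (int Q - 1)) ^ 2" unfolding e4
    by (simp add: power2_eq_square power3_eq_cube power4_eq_xxxx algebra_simps)
  finally show ?thesis .
qed

definition Eset :: "'a set" where "Eset = {y. y \<noteq> 0 \<and> y ^ Q = - y}"

lemma powQk_red: "(y::'a) ^ (Q ^ n) = y ^ (Q ^ (n mod 4))"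
proof -
  have "Q ^ n = Q ^ (4 * (n div 4)) * Q ^ (n mod 4)" by (simp flip: power_add)
  moreover have "y ^ (Q ^ (4 * m)) = y" for m
  proof (induction m)
    case (Suc m)
    have "Q ^ (4 * Suc m) = Q ^ 4 * Q ^ (4 * m)" by (simp flip: power_add)
    hence "y ^ (Q ^ (4 * Suc m)) = (y ^ (Q ^ 4)) ^ (Q ^ (4 * m))" by (simp only: power_mult)
    thus ?case using Suc pow_Q4 by simp
  qed simp
  ultimately show ?thesis by (simp add: power_mult)
qed

lemma powQk_Suc: "(y::'a) ^ (Q ^ Suc n) = (y ^ (Q ^ n)) ^ Q"
  by (simp only: power_Suc2 power_mult)

lemma E_powQ: "y \<in> Eset \<Longrightarrow> y ^ Q \<in> Eset"
  by (auto simp: Eset_def Q_neg)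

lemma E_powQk: "y \<in> Eset \<Longrightarrow> y ^ (Q ^ n) \<in> Eset"
proof (induction n)
  case (Suc n) thus ?case unfolding powQk_Suc by (intro E_powQ) simp
qed simp

lemma E_scal: "l \<in> Fp \<Longrightarrow> l \<noteq> 0 \<Longrightarrow> y \<in> Eset \<Longrightarrow> l * y \<in> Eset"
  by (auto simp: Eset_def power_mult_distrib Fp_def)

lemma T_powQk: "T (x ^ (Q ^ n)) = T x"
proof (induction n)
  case (Suc n) thus ?case unfolding powQk_Suc T_powQ .
qed simp

lemma E_sub_H: "y \<in> Eset \<Longrightarrow> T y = 0"
proof -
  assume y: "y \<in> Eset"
  hence y1: "y ^ Q = - y" by (simp add: Eset_def)
  have y2: "y ^ (Q ^ 2) = y" using y1 by (simp add: power2_eq_square power_mult Q_neg)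
  have y3: "y ^ (Q ^ 3) = - y" using y1 y2 by (simp add: power3_eq_cube power_mult Q_neg)
  show ?thesis using y1 y2 y3 by (simp add: T_def)
qed

definition w0 where "w0 = g ^ (2 * M4)"

lemma w0_E: "w0 \<in> Eset"
proof -
  have "w0 ^ (Q - 1) = g ^ (2 * e)" by (simp add: w0_def e_eq flip: power_mult) (simp add: mult_ac)
  also have "\<dots> = iota ^ 2" by (simp add: iota_def flip: power_mult) (simp add: mult.commute)
  finally have "w0 ^ (Q - 1) = -1" using iota2 by simp
  hence "w0 ^ Q = - w0" using Q_ge3 by (metis Suc_diff_1 bot_nat_0.not_eq_extremum mult.commute mult_minus1_right not_numeral_le_zero power_Suc le_zero_eq)
  thus ?thesis using g_ne0 by (simp add: Eset_def w0_def)
qed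

lemma E_eq: "Eset = (\<lambda>l. l * w0) ` (Fp - {0})"
proof
  have w: "w0 \<noteq> 0" "w0 ^ Q = - w0" using w0_E by (auto simp: Eset_def)
  show "Eset \<subseteq> (\<lambda>l. l * w0) ` (Fp - {0})"
  proof
    fix y assume y: "y \<in> Eset"
    have "(y / w0) ^ Q = y / w0" using y w by (simp add: Eset_def power_divide)
    hence "y / w0 \<in> Fp - {0}" using y w by (auto simp: Fp_def Eset_def)
    thus "y \<in> (\<lambda>l. l * w0) ` (Fp - {0})" using w by (intro image_eqI[of _ _ "y / w0"]) auto
  qed
  show "(\<lambda>l. l * w0) ` (Fp - {0}) \<subseteq> Eset" using E_scal w0_E by auto
qed

lemma card_E: "card Eset = Q - 1"
proof -
  have "w0 \<noteq> 0" using w0_E by (simp add: Eset_def)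
  hence "inj_on (\<lambda>l. l * w0) (Fp - {0})" by (auto simp: inj_on_def)
  thus ?thesis using E_eq card_Fp0 by (simp add: card_image)
qed

definition z0 :: 'a where "z0 = (if even t then -1 else 1)"

lemma chi_E: "y \<in> Eset \<Longrightarrow> chi y = z0"
proof -
  assume "y \<in> Eset"
  then obtain l where l: "l \<in> Fp" "l \<noteq> 0" "y = l * w0" using E_eq by auto
  have "chi y = iota ^ (2 * M4)" using l by (simp add: chi_mult chi_Fp w0_def chi_g)
  also have "\<dots> = z0"
  proof (cases "even t")
    case True
    hence "odd M4" by (simp add: M4_def)
    hence "(2 * M4) mod 4 = 2" by presburger
    thus ?thesis using True iota_pow_cases(3)[of "2 * M4"] by (simp add: z0_def)
  next
    case False
    hence "even M4" by (simp add: M4_def)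
    hence "(2 * M4) mod 4 = 0" by presburger
    thus ?thesis using False iota_pow_cases(1)[of "2 * M4"] by (simp add: z0_def)
  qed
  finally show ?thesis .
qed

lemma two_e_eq: "2 * e = (Q ^ 2 - 1) * (2 * t ^ 2 + 2 * t + 1)"
proof -
  have "Q ^ 2 - 1 = 4 * t * (t + 1)" using Q_t by (simp add: power2_eq_square algebra_simps)
  thus ?thesis using e_eq Q_t by (simp add: M4_def algebra_simps)
qed

lemma FIX:
  assumes y0: "y \<noteq> 0" and chy: "chi y = 1 \<or> chi y = -1" and Ty: "T y = 0"
    and c: "c \<in> Fp" and d: "0 < d" "d < 4" and eq: "y ^ (Q ^ d) = c * y"
  shows "y \<in> Eset"
proof -
  have sq: "(z ^ Q) ^ Q = z ^ (Q ^ 2)" for z :: 'a by (simp add: power2_eq_square power_mult)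
  have cQ: "c ^ Q = c" using c by (simp add: Fp_def)
  have "\<exists>v\<in>Fp. y ^ (Q ^ 2) = v * y"
  proof -
    have "d = 1 \<or> d = 2 \<or> d = 3" using d by auto
    moreover
    { assume "d = 1"
      hence "y ^ Q = c * y" using eq by simp
      hence "y ^ (Q ^ 2) = (c * c) * y" using sq[of y] cQ by (simp add: power_mult_distrib mult.assoc)
      hence ?thesis using c Fp_mult by blast }
    moreover
    { assume "d = 2" hence ?thesis using eq c by auto }
    moreover
    { assume "d = 3"
      hence e3: "y ^ (Q ^ 3) = c * y" using eq by simp
      have c0: "c \<noteq> 0" using e3 y0 by auto
      have "y = y ^ (Q ^ 4)" using pow_Q4 by simp
      also have "\<dots> = (y ^ (Q ^ 3)) ^ Q" by (simp add: powQk_Suc[of y 3, simplified])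
      also have "\<dots> = c * y ^ Q" using e3 cQ by (simp add: power_mult_distrib)
      finally have "y ^ Q = inverse c * y" using c0 by (simp add: field_simps)
      hence "y ^ (Q ^ 2) = (inverse c * inverse c) * y" using sq[of y] Fp_inv[OF c] by (simp add: power_mult_distrib Fp_def mult.assoc)
      hence ?thesis using Fp_mult Fp_inv[OF c] by blast }
    ultimately show ?thesis by blast
  qed
  then obtain v where v: "v \<in> Fp" "y ^ (Q ^ 2) = v * y" by blast
  have vQ2: "v ^ (Q ^ 2) = v" using Fp_powk[OF v(1)] by simp
  have "y = y ^ (Q ^ 4)" using pow_Q4 by simp
  also have "\<dots> = (y ^ (Q ^ 2)) ^ (Q ^ 2)" by (simp flip: power_mult power_add)
  also have "\<dots> = v * v * y" using v vQ2 by (simp add: power_mult_distrib)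
  finally have "(v * v - 1) * y = 0" by (simp add: algebra_simps)
  hence "v * v = 1" using y0 by simp
  hence "v = 1 \<or> v = -1" using power2_eq_1_iff[of v] by (simp add: power2_eq_square)
  moreover have "v \<noteq> -1"
  proof
    assume "v = -1"
    hence "y * y ^ (Q ^ 2 - 1) = y * (-1)" using v(2) Q_ge3 by (metis Suc_diff_1 mult.commute mult_minus1_right nat_0_less_mult_iff power_Suc zero_less_power  not_numeral_le_zero le_zero_eq bot_nat_0.not_eq_extremum)
    hence a: "y ^ (Q ^ 2 - 1) = -1" using y0 by (metis mult_left_cancel)
    have "chi y ^ 2 = y ^ (2 * e)" by (simp add: chi_def flip: power_mult) (simp add: mult.commute)
    also have "\<dots> = (-1) ^ (2 * t ^ 2 + 2 * t + 1)" by (simp only: two_e_eq power_mult a)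
    also have "\<dots> = -1" by (rule neg_one_odd_power) simp
    finally have "chi y ^ 2 = -1" .
    moreover have "chi y ^ 2 = 1" using chy by auto
    ultimately show False using one_ne_m1 by simp
  qed
  ultimately have "v = 1" by simp
  hence y2: "y ^ (Q ^ 2) = y" using v by simp
  hence "y ^ (Q ^ 3) = y ^ Q" by (simp add: power3_eq_cube power2_eq_square power_mult mult.assoc)
  hence "(y + y ^ Q) + (y + y ^ Q) = 0" using Ty y2 by (simp add: T_def add_ac)
  hence "2 * (y + y ^ Q) = 0" by (simp only: mult_2)
  hence "y + y ^ Q = 0" using two_ne0 by (metis mult_eq_0_iff)
  hence "y ^ Q = - y" by (simp add: eq_neg_iff_add_eq_0 add.commute)
  thus ?thesis using y0 by (simp add: Eset_def)
qed

definition orbit :: "'a \<Rightarrow> 'a set" where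
  "orbit y = {l * y ^ (Q ^ k) | l k. l \<in> Fp \<and> l \<noteq> 0 \<and> k < 4}"
definition Aset :: "'a \<Rightarrow> 'a set" where
  "Aset z = {y. T y = 0 \<and> y \<noteq> 0 \<and> chi y = z} - Eset"

lemma rais: "l \<in> Fp \<Longrightarrow> (l * y ^ (Q ^ i)) ^ (Q ^ m) = l * y ^ (Q ^ (i + m))"
  by (simp add: power_mult_distrib Fp_powk power_add flip: power_mult)

lemma powQ4': "(y::'a) ^ (Q ^ 4) = y" by (rule pow_Q4)

lemma chi_powQk_pm: "chi y = 1 \<or> chi y = -1 \<Longrightarrow> chi (y ^ (Q ^ k)) = chi y"
proof (induction k)
  case (Suc k)
  hence "chi (y ^ (Q ^ k)) = 1 \<or> chi (y ^ (Q ^ k)) = -1" by simp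
  thus ?case unfolding powQk_Suc using chi_powQ_pm Suc by simp
qed simp

lemma orbit_in:
  assumes z: "z = 1 \<or> z = -1" and y: "y \<in> Aset z"
  shows "orbit y \<subseteq> Aset z"
proof
  fix x assume "x \<in> orbit y"
  then obtain l k where lk: "l \<in> Fp" "l \<noteq> 0" "k < 4" "x = l * y ^ (Q ^ k)" by (auto simp: orbit_def)
  have y': "T y = 0" "y \<noteq> 0" "chi y = z" "y \<notin> Eset" using y by (auto simp: Aset_def)
  have "T x = 0" using lk y' by (simp add: T_scal T_powQk)
  moreover have "x \<noteq> 0" using lk y' by simp
  moreover have "chi x = z" using lk y' z chi_powQk_pm[of y k] by (simp add: chi_mult chi_Fp)
  moreover have "x \<notin> Eset"
  proof
    assume "x \<in> Eset"
    hence "x ^ (Q ^ (4 - k)) \<in> Eset" by (rule E_powQk)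
    moreover have "x ^ (Q ^ (4 - k)) = l * y" using lk rais[of l y k "4 - k"] powQ4'[of y] by simp
    ultimately have "l * y \<in> Eset" by simp
    have "inverse l * (l * y) \<in> Eset" by (rule E_scal) (use lk Fp_inv \<open>l * y \<in> Eset\<close> in auto)
    moreover have "inverse l * (l * y) = y" using lk(2) by simp
    ultimately show False using y' by simp
  qed
  ultimately show "x \<in> Aset z" by (simp add: Aset_def)
qed

lemma orbit_inj_aux:
  assumes z: "z = 1 \<or> z = -1" and y: "y \<in> Aset z"
    and l: "l \<in> Fp" "l \<noteq> 0" "l' \<in> Fp" "l' \<noteq> 0" and ij: "i < j" "j < 4"
    and eq: "l * y ^ (Q ^ i) = l' * y ^ (Q ^ j)"
  shows False
proof -
  have y': "T y = 0" "y \<noteq> 0" "chi y = z" "y \<notin> Eset" using y by (auto simp: Aset_def)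
  have "(l * y ^ (Q ^ i)) ^ (Q ^ (4 - j)) = (l' * y ^ (Q ^ j)) ^ (Q ^ (4 - j))" using eq by simp
  hence "l * y ^ (Q ^ (i + (4 - j))) = l' * y" using rais[OF l(1)] rais[OF l(3), of y j "4 - j"] ij powQ4'[of y] by simp
  hence "y ^ (Q ^ (i + (4 - j))) = (l' / l) * y" using l by (simp add: field_simps)
  hence "y \<in> Eset" using y' z ij l by (intro FIX[of y "l' / l" "i + (4 - j)"]) (auto intro: Fp_div)
  thus False using y' by simp
qed

lemma orbit_card:
  assumes z: "z = 1 \<or> z = -1" and y: "y \<in> Aset z"
  shows "card (orbit y) = 4 * (Q - 1)"
proof -
  have y0: "y \<noteq> 0" using y by (simp add: Aset_def)
  have oe: "orbit y = (\<lambda>(l, k). l * y ^ (Q ^ k)) ` ((Fp - {0}) \<times> {..<4})"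
    by (auto simp: orbit_def)
  have key: "l = l' \<and> k = k'" if a: "l \<in> Fp" "l \<noteq> 0" "k < 4" "l' \<in> Fp" "l' \<noteq> 0" "k' < 4"
      and eq: "l * y ^ (Q ^ k) = l' * y ^ (Q ^ k')" for l k l' k'
  proof -
    have "k = k'"
    proof (rule ccontr)
      assume "k \<noteq> k'"
      hence "k < k' \<or> k' < k" by auto
      thus False
      proof
        assume "k < k'" thus False using orbit_inj_aux[OF z y a(1,2,4,5) _ a(6) eq] by simp
      next
        assume "k' < k" thus False using orbit_inj_aux[OF z y a(4,5,1,2) _ a(3) eq[symmetric]] by simp
      qed
    qed
    thus "l = l' \<and> k = k'" using eq y0 by simp
  qed
  have "inj_on (\<lambda>(l, k). l * y ^ (Q ^ k)) ((Fp - {0}) \<times> {..<4})"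
    unfolding inj_on_def using key by auto
  hence "card (orbit y) = card ((Fp - {0}) \<times> {..<4::nat})" unfolding oe by (rule card_image)
  thus ?thesis using card_Fp0 by (simp add: card_cartesian_product)
qed

lemma orbit_sub: "z \<in> orbit y \<Longrightarrow> orbit z \<subseteq> orbit y"
proof
  fix x assume z: "z \<in> orbit y" and "x \<in> orbit z"
  then obtain l k where lk: "l \<in> Fp" "l \<noteq> 0" "k < 4" "z = l * y ^ (Q ^ k)" by (auto simp: orbit_def)
  obtain l' k' where lk': "l' \<in> Fp" "l' \<noteq> 0" "k' < 4" "x = l' * z ^ (Q ^ k')"
    using \<open>x \<in> orbit z\<close> by (auto simp: orbit_def)
  have "x = (l' * l) * y ^ (Q ^ ((k + k') mod 4))"
    using lk lk' rais[of l y k k'] powQk_red[of y "k + k'"] by simp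
  moreover have "l' * l \<in> Fp" "l' * l \<noteq> 0" using lk lk' by (auto intro: Fp_mult)
  ultimately show "x \<in> orbit y" unfolding orbit_def by force
qed

lemma orbit_self: "y \<in> orbit y"
  unfolding orbit_def using Fp_1 by (intro CollectI exI[of _ 1] exI[of _ 0]) auto

lemma orbit_same: "z \<in> orbit y \<Longrightarrow> orbit z = orbit y"
proof
  assume z: "z \<in> orbit y"
  show "orbit z \<subseteq> orbit y" by (rule orbit_sub[OF z])
  obtain l k where lk: "l \<in> Fp" "l \<noteq> 0" "k < 4" "z = l * y ^ (Q ^ k)" using z by (auto simp: orbit_def)
  have "z ^ (Q ^ (4 - k)) = l * y" using lk rais[of l y k "4 - k"] powQ4'[of y] by simp
  hence e1: "z ^ (Q ^ ((4 - k) mod 4)) = l * y" using powQk_red[of z "4 - k"] by simp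
  have "y = inverse l * z ^ (Q ^ ((4 - k) mod 4))" unfolding e1 using lk(2) by simp
  moreover have "inverse l \<in> Fp" "inverse l \<noteq> 0" using lk by (auto intro: Fp_inv)
  ultimately have "y \<in> orbit z" unfolding orbit_def by force
  thus "orbit y \<subseteq> orbit z" by (rule orbit_sub)
qed

lemma A_dvd:
  assumes z: "z = 1 \<or> z = -1"
  shows "4 * (Q - 1) dvd card (Aset z)"
proof -
  have U: "Aset z = \<Union> (orbit ` Aset z)" using orbit_in[OF z] orbit_self by blast
  have "4 * (Q - 1) dvd card (\<Union> (orbit ` Aset z))"
  proof (rule dvd_partition)
    show "finite (\<Union> (orbit ` Aset z))" by simp
    show "\<forall>c\<in>orbit ` Aset z. 4 * (Q - 1) dvd card c" using orbit_card[OF z] by auto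
    show "\<forall>c1\<in>orbit ` Aset z. \<forall>c2\<in>orbit ` Aset z. c1 \<noteq> c2 \<longrightarrow> c1 \<inter> c2 = {}"
    proof (intro ballI impI)
      fix c1 c2 assume c: "c1 \<in> orbit ` Aset z" "c2 \<in> orbit ` Aset z" "c1 \<noteq> c2"
      then obtain y1 y2 where y12: "c1 = orbit y1" "c2 = orbit y2" by auto
      show "c1 \<inter> c2 = {}"
      proof (rule ccontr)
        assume "c1 \<inter> c2 \<noteq> {}"
        then obtain w where "w \<in> orbit y1" "w \<in> orbit y2" using y12 by auto
        hence "orbit y1 = orbit y2" using orbit_same by metis
        thus False using c y12 by simp
      qed
    qed
  qed
  thus ?thesis using U by simp
qed

lemma mv_decomp:
  assumes z: "z = 1 \<or> z = -1"
  shows "mv z = card (Aset z) + (if z = z0 then Q - 1 else 0)"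
proof -
  have Es: "{y. T y = 0 \<and> y \<noteq> 0 \<and> chi y = z} \<inter> Eset = (if z = z0 then Eset else {})"
    using E_sub_H chi_E by (auto simp: Eset_def)
  have "{y. T y = 0 \<and> y \<noteq> 0 \<and> chi y = z} = Aset z \<union> ({y. T y = 0 \<and> y \<noteq> 0 \<and> chi y = z} \<inter> Eset)"
    by (auto simp: Aset_def)
  moreover have "card (Aset z \<union> ({y. T y = 0 \<and> y \<noteq> 0 \<and> chi y = z} \<inter> Eset)) =
      card (Aset z) + card ({y. T y = 0 \<and> y \<noteq> 0 \<and> chi y = z} \<inter> Eset)"
    by (rule card_Un_disjoint) (auto simp: Aset_def)
  ultimately have "mv z = card (Aset z) + card ({y. T y = 0 \<and> y \<noteq> 0 \<and> chi y = z} \<inter> Eset)"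
    unfolding mv_def by simp
  thus ?thesis using Es card_E by simp
qed

lemma XY_diff: "int Xv - int Yv = int Q * (int Q - 1)"
proof -
  have d: "int Xv - int Yv = int (mv (-1)) - int (mv 1)" by (simp add: Xv_def Yv_def)
  obtain a where a: "card (Aset (-1)) = 4 * (Q - 1) * a" using A_dvd[of "-1"] by auto
  obtain b where b: "card (Aset 1) = 4 * (Q - 1) * b" using A_dvd[of 1] by auto
  have Q1: "int (Q - 1) = int Q - 1" using Q_ge3 by simp
  have Qne: "int Q - 1 \<noteq> 0" using Q_ge3 by simp
  have sq: "(int Xv - int Yv) ^ 2 = (int Q * (int Q - 1)) ^ 2" by (rule XY_diff_sq)
  hence "int Xv - int Yv = int Q * (int Q - 1) \<or> int Xv - int Yv = - (int Q * (int Q - 1))"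
    using power2_eq_iff by blast
  moreover have "int Xv - int Yv \<noteq> - (int Q * (int Q - 1))"
  proof
    assume neg: "int Xv - int Yv = - (int Q * (int Q - 1))"
    show False
    proof (cases "even t")
      case True
      have "mv (-1) = 4 * (Q - 1) * a + (Q - 1)" "mv 1 = 4 * (Q - 1) * b"
        using mv_decomp[of "-1"] mv_decomp[of 1] a b True one_ne_m1 by (auto simp: z0_def)
      hence "int (mv (-1)) = 4 * (int Q - 1) * int a + (int Q - 1)" "int (mv 1) = 4 * (int Q - 1) * int b"
        using Q_ge3 by simp_all
      hence "int Xv - int Yv = (int Q - 1) * (4 * int a - 4 * int b + 1)" unfolding d by (simp add: algebra_simps)
      hence "(int Q - 1) * (4 * int a - 4 * int b + 1) = (int Q - 1) * (- int Q)"
        using neg by (simp add: algebra_simps)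
      hence "4 * int a - 4 * int b + 1 = - int Q" using Qne mult_left_cancel by blast
      moreover obtain s where "t = 2 * s" using True by auto
      ultimately show False using Q_t by presburger
    next
      case False
      have "mv (-1) = 4 * (Q - 1) * a" "mv 1 = 4 * (Q - 1) * b + (Q - 1)"
        using mv_decomp[of "-1"] mv_decomp[of 1] a b False one_ne_m1 by (auto simp: z0_def)
      hence "int (mv (-1)) = 4 * (int Q - 1) * int a" "int (mv 1) = 4 * (int Q - 1) * int b + (int Q - 1)"
        using Q_ge3 by simp_all
      hence "int Xv - int Yv = (int Q - 1) * (4 * int a - 4 * int b - 1)" unfolding d by (simp add: algebra_simps)
      hence "(int Q - 1) * (4 * int a - 4 * int b - 1) = (int Q - 1) * (- int Q)"
        using neg by (simp add: algebra_simps)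
      hence "4 * int a - 4 * int b - 1 = - int Q" using Qne mult_left_cancel by blast
      moreover obtain s where "t = 2 * s + 1" using False by (metis oddE)
      ultimately show False using Q_t by presburger
    qed
  qed
  ultimately show ?thesis by blast
qed

definition Sset :: "'a \<Rightarrow> 'a set" where "Sset h = {x + h * y | x y. x \<in> Fp \<and> y \<in> Fp}"
definition Rset :: "'a \<Rightarrow> 'a set" where "Rset h = {a. T a = 0 \<and> T (h * a) = 0}"

lemma S_card:
  assumes h: "h \<notin> Fp"
  shows "card (Sset h) = Q ^ 2"
proof -
  have e: "Sset h = (\<lambda>(x, y). x + h * y) ` (Fp \<times> Fp)" by (auto simp: Sset_def)
  have "inj_on (\<lambda>(x, y). x + h * y) (Fp \<times> Fp)"
  proof (rule inj_onI, clarsimp)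
    fix x y x' y' assume a: "x \<in> Fp" "y \<in> Fp" "x' \<in> Fp" "y' \<in> Fp" and eq: "x + h * y = x' + h * y'"
    have "y = y'"
    proof (rule ccontr)
      assume "y \<noteq> y'"
      hence "h = (x' - x) / (y - y')" using eq by (simp add: field_simps)
      thus False using h a by (simp add: Fp_div Fp_diff)
    qed
    thus "x = x' \<and> y = y'" using eq by simp
  qed
  thus ?thesis unfolding e by (simp add: card_image card_cartesian_product card_Fp power2_eq_square)
qed

lemma S_0: "0 \<in> Sset h" unfolding Sset_def using Fp_0 by force

lemma S_diff: "a \<in> Sset h \<Longrightarrow> b \<in> Sset h \<Longrightarrow> a - b \<in> Sset h"
proof -
  assume "a \<in> Sset h" "b \<in> Sset h"
  then obtain x y x' y' where "x \<in> Fp" "y \<in> Fp" "x' \<in> Fp" "y' \<in> Fp" "a = x + h * y" "b = x' + h * y'"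
    by (auto simp: Sset_def)
  moreover have "x + h * y - (x' + h * y') = (x - x') + h * (y - y')" by (simp add: algebra_simps)
  ultimately have "a - b = (x - x') + h * (y - y')" "x - x' \<in> Fp" "y - y' \<in> Fp" by (auto intro: Fp_diff)
  thus ?thesis unfolding Sset_def by blast
qed

lemma S_perp: "c \<in> Sset h \<Longrightarrow> a \<in> Rset h \<Longrightarrow> T (a * c) = 0"
proof -
  assume "c \<in> Sset h" "a \<in> Rset h"
  then obtain x y where xy: "x \<in> Fp" "y \<in> Fp" "c = x + h * y" "T a = 0" "T (h * a) = 0"
    by (auto simp: Sset_def Rset_def)
  have "a * c = x * a + y * (h * a)" using xy by (simp add: algebra_simps)
  thus ?thesis using xy by (simp add: T_add T_scal)
qed

lemma R_card: "h \<notin> Fp \<Longrightarrow> card (Rset h) = Q ^ 2"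
  using card_R by (simp add: Rset_def)

lemma notS_count:
  assumes h: "h \<notin> Fp" and c: "c \<notin> Sset h"
  shows "card {a \<in> Rset h. T (a * c) = 0} = Q"
proof -
  have "\<exists>a. T a = 0 \<and> T (h * a) = 0 \<and> T (c * a) \<noteq> 0"
  proof (rule ccontr)
    assume "\<not> ?thesis"
    hence "\<And>a. T a = 0 \<Longrightarrow> T (h * a) = 0 \<Longrightarrow> T (c * a) = 0" by blast
    from KER2[OF h this] obtain x y where "x \<in> Fp" "y \<in> Fp" "c = x + h * y" by blast
    thus False using c by (auto simp: Sset_def)
  qed
  then obtain a where a: "T a = 0" "T (h * a) = 0" "T (c * a) \<noteq> 0" by blast
  define a1 where "a1 = inverse (T (c * a)) * a"
  have il: "inverse (T (c * a)) \<in> Fp" using Fp_inv T_Fp by blast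
  have a1: "a1 \<in> Rset h" "T (c * a1) = 1"
    using a T_scal[OF il, of a] T_scal'[OF il, of h a] T_scal'[OF il, of c a]
    by (auto simp: a1_def Rset_def)
  have "card (Rset h) = Q * card {a \<in> Rset h. T (c * a) = 0}"
    by (rule card_Tfun[OF _ _ _ a1])
       (auto simp: Rset_def distrib_left right_diff_distrib T_add T_diff T_scal T_scal' mult.left_commute)
  hence "Q * Q = Q * card {a \<in> Rset h. T (a * c) = 0}" using R_card[OF h] by (simp add: power2_eq_square mult.commute)
  thus ?thesis using Q_ge3 by simp
qed

lemma main_count:
  assumes h: "h \<notin> Fp"
  shows "2 * e + card (Rset h \<inter> Dset) * Xv + card (Rset h \<inter> Bset) * Yv
       = card (Cset \<inter> Sset h) * Q ^ 2 + (2 * e - card (Cset \<inter> Sset h)) * Q"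
proof -
  define R where "R = Rset h"
  define ind where "ind a c = (of_bool (T (a * c) = 0) :: nat)" for a c
  have V: "Vf a = (\<Sum>c\<in>Cset. ind a c)" for a
  proof -
    have "(\<Sum>c\<in>Cset. ind a c) = card (Cset \<inter> {c. T (a * c) = 0})"
      unfolding ind_def by simp
    thus ?thesis unfolding Vf_def by (simp add: Int_def)
  qed
  have R0: "0 \<in> R" using T_0 by (simp add: R_def Rset_def)
  have "(\<Sum>a\<in>R. Vf a) = (\<Sum>a\<in>R. \<Sum>c\<in>Cset. ind a c)" by (simp only: V)
  also have "\<dots> = (\<Sum>c\<in>Cset. \<Sum>a\<in>R. ind a c)" by (rule sum.swap)
  also have "\<dots> = (\<Sum>c\<in>Cset. card {a \<in> R. T (a * c) = 0})"
  proof (rule sum.cong[OF refl])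
    fix c
    have "(\<Sum>a\<in>R. ind a c) = card (R \<inter> {a. T (a * c) = 0})" unfolding ind_def by simp
    thus "(\<Sum>a\<in>R. ind a c) = card {a \<in> R. T (a * c) = 0}" by (simp add: Int_def)
  qed
  also have "\<dots> = (\<Sum>c\<in>Cset \<inter> Sset h. card {a \<in> R. T (a * c) = 0}) + (\<Sum>c\<in>Cset - Sset h. card {a \<in> R. T (a * c) = 0})"
    by (rule sum.Int_Diff) simp
  also have "(\<Sum>c\<in>Cset \<inter> Sset h. card {a \<in> R. T (a * c) = 0}) = (\<Sum>c\<in>Cset \<inter> Sset h. Q ^ 2)"
  proof (rule sum.cong[OF refl])
    fix c assume "c \<in> Cset \<inter> Sset h"
    hence "{a \<in> R. T (a * c) = 0} = R" using S_perp by (auto simp: R_def)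
    thus "card {a \<in> R. T (a * c) = 0} = Q ^ 2" using R_card[OF h] by (simp add: R_def)
  qed
  also have "(\<Sum>c\<in>Cset - Sset h. card {a \<in> R. T (a * c) = 0}) = (\<Sum>c\<in>Cset - Sset h. Q)"
    by (rule sum.cong[OF refl]) (use notS_count[OF h] in \<open>auto simp: R_def\<close>)
  finally have rhs: "(\<Sum>a\<in>R. Vf a) = card (Cset \<inter> Sset h) * Q ^ 2 + card (Cset - Sset h) * Q" by simp
  have cd: "card (Cset - Sset h) = 2 * e - card (Cset \<inter> Sset h)"
    using card_Cset card_Diff_subset_Int[of Cset "Sset h"] by simp
  have "(\<Sum>a\<in>R. Vf a) = Vf 0 + (\<Sum>a\<in>R - {0}. Vf a)" using R0 by (simp add: sum.remove)
  also have "Vf 0 = 2 * e" using card_Cset T_0 by (simp add: Vf_def)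
  also have "R - {0} = (R \<inter> Dset) \<union> (R \<inter> Bset)" using DB_part by blast
  also have "(\<Sum>a\<in>(R \<inter> Dset) \<union> (R \<inter> Bset). Vf a) = (\<Sum>a\<in>R \<inter> Dset. Vf a) + (\<Sum>a\<in>R \<inter> Bset. Vf a)"
    by (rule sum.union_disjoint) (use DB_part(2) in auto)
  also have "(\<Sum>a\<in>R \<inter> Dset. Vf a) = (\<Sum>a\<in>R \<inter> Dset. Xv)" by (rule sum.cong) (auto simp: Dset_def Vf_D)
  also have "(\<Sum>a\<in>R \<inter> Bset. Vf a) = (\<Sum>a\<in>R \<inter> Bset. Yv)" by (rule sum.cong) (auto simp: Bset_def Vf_B)
  finally show ?thesis using rhs cd by (simp add: R_def)
qed

lemma cS_eq_nD:
  assumes h: "h \<notin> Fp"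
  shows "card (Cset \<inter> Sset h) = card (Rset h \<inter> Dset)"
proof -
  define cS where "cS = card (Cset \<inter> Sset h)"
  define nD where "nD = card (Rset h \<inter> Dset)"
  define nB where "nB = card (Rset h \<inter> Bset)"
  have R0: "0 \<in> Rset h" using T_0 by (simp add: Rset_def)
  have "Rset h - {0} = (Rset h \<inter> Dset) \<union> (Rset h \<inter> Bset)" using DB_part by blast
  moreover have "card ((Rset h \<inter> Dset) \<union> (Rset h \<inter> Bset)) = nD + nB" unfolding nD_def nB_def
    by (rule card_Un_disjoint) (simp, simp, use DB_part(2) in blast)
  ultimately have "card (Rset h - {0}) = nD + nB" by simp
  moreover have "card (Rset h - {0}) = Q ^ 2 - 1" using R_card[OF h] R0 by simp
  ultimately have nDB: "nD + nB = Q ^ 2 - 1" by simp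
  have "card (Cset \<inter> Sset h) \<le> card Cset" by (rule card_mono) auto
  hence cS_le: "cS \<le> 2 * e" unfolding cS_def using card_Cset by simp
  have Q21: "Q ^ 2 \<ge> 1" using Q_ge3 by simp
  have nb: "int nB = int Q ^ 2 - 1 - int nD"
  proof -
    have "int (nD + nB) = int (Q ^ 2 - 1)" using nDB by simp
    thus ?thesis using Q21 by simp
  qed
  have m: "2 * int e + int nD * int Xv + int nB * int Yv = int cS * int Q ^ 2 + (2 * int e - int cS) * int Q"
  proof -
    have "int (2 * e + nD * Xv + nB * Yv) = int (cS * Q ^ 2 + (2 * e - cS) * Q)"
      using main_count[OF h] by (simp add: cS_def nD_def nB_def)
    thus ?thesis using cS_le by (simp add: of_nat_diff)
  qed
  have Q31: "Q ^ 3 \<ge> 1" using Q_ge3 by simp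
  have s: "int Xv + int Yv = int Q ^ 3 - 1"
  proof -
    have "int (Xv + Yv) = int (Q ^ 3 - 1)" using XY_sum by simp
    thus ?thesis using Q31 by simp
  qed
  have x2: "2 * int Xv = int Q ^ 3 - 1 + int Q * (int Q - 1)" using s XY_diff by simp
  have y2: "2 * int Yv = int Q ^ 3 - 1 - int Q * (int Q - 1)" using s XY_diff by simp
  have e4: "4 * int e = int Q ^ 4 - 1"
  proof -
    have "int (q - 1) = int (4 * e)" using q1_e by simp
    thus ?thesis using q_eq q_ge by simp
  qed
  have "2 * (2 * int e + int nD * int Xv + int nB * int Yv)
      = 4 * int e + int nD * (2 * int Xv) + int nB * (2 * int Yv)" by (simp add: algebra_simps)
  also have "\<dots> = (int Q ^ 4 - 1) + int nD * (int Q ^ 3 - 1 + int Q * (int Q - 1))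
      + (int Q ^ 2 - 1 - int nD) * (int Q ^ 3 - 1 - int Q * (int Q - 1))" by (simp only: e4 x2 y2 nb)
  also have "\<dots> = int Q * (int Q ^ 4 - 1) + 2 * int nD * (int Q ^ 2 - int Q)"
    by (simp add: algebra_simps power2_eq_square power3_eq_cube power4_eq_xxxx)
  finally have L: "2 * (2 * int e + int nD * int Xv + int nB * int Yv) = int Q * (int Q ^ 4 - 1) + 2 * int nD * (int Q ^ 2 - int Q)" .
  have "2 * (int cS * int Q ^ 2 + (2 * int e - int cS) * int Q) = 2 * int cS * int Q ^ 2 + (4 * int e - 2 * int cS) * int Q"
    by (simp add: algebra_simps)
  also have "\<dots> = 2 * int cS * int Q ^ 2 + (int Q ^ 4 - 1 - 2 * int cS) * int Q" by (simp only: e4)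
  also have "\<dots> = int Q * (int Q ^ 4 - 1) + 2 * int cS * (int Q ^ 2 - int Q)" by (simp add: algebra_simps)
  finally have R: "2 * (int cS * int Q ^ 2 + (2 * int e - int cS) * int Q) = int Q * (int Q ^ 4 - 1) + 2 * int cS * (int Q ^ 2 - int Q)" .
  have "int Q * (int Q ^ 4 - 1) + 2 * int nD * (int Q ^ 2 - int Q) = int Q * (int Q ^ 4 - 1) + 2 * int cS * (int Q ^ 2 - int Q)"
    using arg_cong[OF m, of "\<lambda>v. 2 * v"] unfolding L R .
  hence "(int Q ^ 2 - int Q) * int nD = (int Q ^ 2 - int Q) * int cS" by (simp add: mult.commute mult.left_commute)
  moreover have "int Q ^ 2 - int Q \<noteq> 0"
  proof -
    have "int Q * 1 < int Q * int Q" using Q_ge3 by (intro mult_strict_left_mono) auto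
    thus ?thesis using Q_ge3 by (simp add: power2_eq_square)
  qed
  ultimately have "int nD = int cS" using mult_left_cancel by blast
  thus ?thesis by (simp add: cS_def nD_def)
qed

lemma clique_iff_C: "peisert_clique g (Sset h) \<longleftrightarrow> Sset h - {0} \<subseteq> Cset"
proof
  assume cl: "peisert_clique g (Sset h)"
  show "Sset h - {0} \<subseteq> Cset"
  proof
    fix s assume s: "s \<in> Sset h - {0}"
    hence "peisert_adj g s 0" using cl S_0 unfolding peisert_clique_def by blast
    thus "s \<in> Cset" using peisert_adj_iff[of s 0] by (simp add: Cset_def)
  qed
next
  assume sub: "Sset h - {0} \<subseteq> Cset"
  show "peisert_clique g (Sset h)" unfolding peisert_clique_def
  proof (intro ballI impI)
    fix x y assume xy: "x \<in> Sset h" "y \<in> Sset h" "x \<noteq> y"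
    hence "x - y \<in> Sset h - {0}" using S_diff by auto
    hence "x - y \<in> Cset" using sub by blast
    thus "peisert_adj g x y" using peisert_adj_iff[of x y] xy by (simp add: Cset_def)
  qed
qed

lemma main_equiv:
  assumes h: "h \<notin> Fp"
  shows "peisert_clique g (Sset h) \<longleftrightarrow> Rset h \<inter> Bset = {}"
proof -
  have R0: "0 \<in> Rset h" using T_0 by (simp add: Rset_def)
  have RD: "card (Rset h \<inter> Dset) + card (Rset h \<inter> Bset) = Q ^ 2 - 1"
  proof -
    have "Rset h - {0} = (Rset h \<inter> Dset) \<union> (Rset h \<inter> Bset)" using DB_part by blast
    moreover have "card ((Rset h \<inter> Dset) \<union> (Rset h \<inter> Bset)) = card (Rset h \<inter> Dset) + card (Rset h \<inter> Bset)"
      by (rule card_Un_disjoint) (simp, simp, use DB_part(2) in blast)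
    ultimately have "card (Rset h - {0}) = card (Rset h \<inter> Dset) + card (Rset h \<inter> Bset)" by simp
    moreover have "card (Rset h - {0}) = Q ^ 2 - 1" using R_card[OF h] R0 by simp
    ultimately show ?thesis by simp
  qed
  have S1: "card (Sset h - {0}) = Q ^ 2 - 1" using S_card[OF h] S_0 by simp
  have CS: "Cset \<inter> Sset h \<subseteq> Sset h - {0}" by (auto simp: Cset_def)
  have "peisert_clique g (Sset h) \<longleftrightarrow> Sset h - {0} \<subseteq> Cset" by (rule clique_iff_C)
  also have "\<dots> \<longleftrightarrow> card (Cset \<inter> Sset h) = Q ^ 2 - 1"
  proof
    assume "Sset h - {0} \<subseteq> Cset"
    hence "Cset \<inter> Sset h = Sset h - {0}" using CS by blast
    thus "card (Cset \<inter> Sset h) = Q ^ 2 - 1" using S1 by simp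
  next
    assume "card (Cset \<inter> Sset h) = Q ^ 2 - 1"
    hence "Cset \<inter> Sset h = Sset h - {0}" using CS S1 by (intro card_subset_eq) auto
    thus "Sset h - {0} \<subseteq> Cset" by blast
  qed
  also have "\<dots> \<longleftrightarrow> card (Rset h \<inter> Bset) = 0"
  proof -
    have "card (Cset \<inter> Sset h) = card (Rset h \<inter> Dset)" by (rule cS_eq_nD[OF h])
    thus ?thesis using RD by arith
  qed
  also have "\<dots> \<longleftrightarrow> Rset h \<inter> Bset = {}" by simp
  finally show ?thesis .
qed

lemma I_eq_H: "{x ^ Q - x | x. True} = {y. T y = 0}"
proof -
  define f where "f x = x ^ Q - x" for x :: 'a
  have rng: "{x ^ Q - x | x. True} = range f" by (auto simp: f_def)
  have sub: "range f \<subseteq> {y. T y = 0}" by (auto simp: f_def T_diff T_powQ)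
  have "card (UNIV :: 'a set) = card (f ` UNIV) * card {x\<in>UNIV. f x = 0}"
    by (rule card_fibers) (auto simp: f_def Q_add)
  moreover have "{x\<in>UNIV. f x = 0} = Fp" by (auto simp: f_def Fp_def)
  ultimately have "Q ^ 4 = card (range f) * Q" using card_Fp q_eq q_def by simp
  hence "Q * Q ^ 3 = Q * card (range f)" by (simp add: power_Suc[symmetric] mult.commute del: power_Suc)
  hence "card (range f) = card {y. T y = 0}" using card_H Q_ge3 by simp
  hence "range f = {y. T y = 0}" using sub by (intro card_subset_eq) auto
  thus ?thesis using rng by simp
qed

lemma B_eq: "{g ^ (4 * k) | k. 1 \<le> k \<and> k \<le> (card (UNIV :: 'a set) - 1) div 4}
             \<union> {g ^ (4 * k + 3) | k. 1 \<le> k \<and> k \<le> (card (UNIV :: 'a set) - 1) div 4} = Bset"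
proof -
  have ed: "(card (UNIV :: 'a set) - 1) div 4 = e" by (simp add: e_def q_def)
  have ge: "g ^ (4 * e) = 1" using q1_e pow_q1[OF g_ne0] by simp
  have i3: "iota ^ 3 = - iota" using iota2 by (simp add: power3_eq_cube power2_eq_square)
  show ?thesis unfolding ed
  proof
    show "{g ^ (4 * k) | k. 1 \<le> k \<and> k \<le> e} \<union> {g ^ (4 * k + 3) | k. 1 \<le> k \<and> k \<le> e} \<subseteq> Bset"
    proof
      fix x assume "x \<in> {g ^ (4 * k) | k. 1 \<le> k \<and> k \<le> e} \<union> {g ^ (4 * k + 3) | k. 1 \<le> k \<and> k \<le> e}"
      then obtain k where "x = g ^ (4 * k) \<or> x = g ^ (4 * k + 3)" by blast
      moreover have "iota ^ (4 * k) = 1" "iota ^ (4 * k + 3) = - iota"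
        using iota_pow_cases(1)[of "4 * k"] iota_pow_cases(4)[of "4 * k + 3"] by simp_all
      ultimately show "x \<in> Bset" using g_ne0 by (auto simp: Bset_def chi_g)
    qed
    show "Bset \<subseteq> {g ^ (4 * k) | k. 1 \<le> k \<and> k \<le> e} \<union> {g ^ (4 * k + 3) | k. 1 \<le> k \<and> k \<le> e}"
    proof
      fix x assume x: "x \<in> Bset"
      show "x \<in> {g ^ (4 * k) | k. 1 \<le> k \<and> k \<le> e} \<union> {g ^ (4 * k + 3) | k. 1 \<le> k \<and> k \<le> e}"
      proof (cases "chi x = 1")
        case True
        hence "x \<in> {x. x \<noteq> 0 \<and> chi x = iota ^ 0}" using x by (simp add: Bset_def)
        then obtain k where k: "k < e" "x = g ^ (4 * k)" using class_image[of 0] by auto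
        show ?thesis
        proof (cases "k = 0")
          case True
          hence "x = g ^ (4 * e)" using k ge by simp
          thus ?thesis using e_pos by auto
        next
          case False
          thus ?thesis using k by auto
        qed
      next
        case False
        hence "x \<in> {x. x \<noteq> 0 \<and> chi x = iota ^ 3}" using x i3 by (simp add: Bset_def)
        then obtain k where k: "k < e" "x = g ^ (4 * k + 3)" using class_image[of 3] by auto
        show ?thesis
        proof (cases "k = 0")
          case True
          hence "x = g ^ (4 * e + 3)" using k ge by (simp add: power_add)
          moreover have "1 \<le> e" using e_pos by simp
          ultimately show ?thesis by blast
        next
          case False
          thus ?thesis using k by auto
        qed
      qed
    qed
  qed
qed

end

theorem theorem5p7:
  fixes g h :: "'a::{finite,field}" and p r :: nat
  assumes "r > 0" and "prime p" and "p mod 4 = 3"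
    and "card (UNIV :: 'a set) = p ^ (4 * r)"
    and "primitive_root g"
    and "h \<notin> subfield_pow (p ^ r)"
  shows "peisert_clique g {x + h * y | x y. x \<in> subfield_pow (p ^ r) \<and> y \<in> subfield_pow (p ^ r)}
    \<longleftrightarrow> ({x ^ (p ^ r) - x | x. True} \<inter> {inverse h * z | z. z \<in> {x ^ (p ^ r) - x | x. True}}
          \<inter> ({g ^ (4 * k) | k. 1 \<le> k \<and> k \<le> (card (UNIV :: 'a set) - 1) div 4}
             \<union> {g ^ (4 * k + 3) | k. 1 \<le> k \<and> k \<le> (card (UNIV :: 'a set) - 1) div 4}) = {})"
proof -
  interpret PS p r g using assms(1-5) by unfold_locales
  have F: "subfield_pow (p ^ r) = Fp" by (simp add: subfield_pow_def Fp_def Q_def)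
  have h: "h \<notin> Fp" using assms(6) F by simp
  have h0: "h \<noteq> 0" using h Fp_0 by auto
  have I: "{x ^ (p ^ r) - x | x. True} = {y. T y = 0}" using I_eq_H by (simp add: Q_def)
  have hI: "{inverse h * z | z. z \<in> {y. T y = 0}} = {a. T (h * a) = 0}"
  proof
    show "{inverse h * z | z. z \<in> {y. T y = 0}} \<subseteq> {a. T (h * a) = 0}" using h0 by (auto simp: field_simps)
    show "{a. T (h * a) = 0} \<subseteq> {inverse h * z | z. z \<in> {y. T y = 0}}"
    proof
      fix a assume "a \<in> {a. T (h * a) = 0}"
      thus "a \<in> {inverse h * z | z. z \<in> {y. T y = 0}}" using h0 by (intro CollectI exI[of _ "h * a"]) auto
    qed
  qed
  have RB: "{x ^ (p ^ r) - x | x. True} \<inter> {inverse h * z | z. z \<in> {x ^ (p ^ r) - x | x. True}}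
          \<inter> ({g ^ (4 * k) | k. 1 \<le> k \<and> k \<le> (card (UNIV :: 'a set) - 1) div 4}
             \<union> {g ^ (4 * k + 3) | k. 1 \<le> k \<and> k \<le> (card (UNIV :: 'a set) - 1) div 4}) = Rset h \<inter> Bset"
    unfolding I hI B_eq by (auto simp: Rset_def)
  have S: "{x + h * y | x y. x \<in> subfield_pow (p ^ r) \<and> y \<in> subfield_pow (p ^ r)} = Sset h"
    by (simp add: F Sset_def)
  show ?thesis unfolding RB S by (rule main_equiv[OF h])
qed

end
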